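(* Let $G$ be an extraspecial or almost extraspecial $2$-group of order $2^n$, $n\geq 3$. Then for every $0\leq k\leq n$, $$s_k(G)\leq s_k(D_8\times C_2^{n-3}).$$
   Context: A finite $2$-group $G$ is extraspecial if $Z(G)=G'=\Phi(G)$ has order $2$, and almost extraspecial if $G'=\Phi(G)$ has order $2$ and $Z(G)\cong C_4$. For a finite $2$-group $G$ of order $2^n$ and $0\le k\le n$, $s_k(G)$ is the number of subgroups of $G$ of order $2^k$. $D_8$ is the dihedral group of order $8$, $C_2^m$ the elementary abelian group of order $2^m$. *)

theory Defs
  imports "HOL-Algebra.Algebra" "HOL-Algebra.Weak_Morphisms"
begin

definition center :: "('a, 'b) monoid_scheme \<Rightarrow> 'a set" where
  "center G = {z \<in> carrier G. \<forall>g \<in> carrier G. z \<otimes>\<^bsub>G\<^esub> g = g \<otimes>\<^bsub>G\<^esub> z}"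

definition commutator_subgroup :: "('a, 'b) monoid_scheme \<Rightarrow> 'a set" where
  "commutator_subgroup G = derived G (carrier G)"

definition maximal_subgroup :: "('a, 'b) monoid_scheme \<Rightarrow> 'a set \<Rightarrow> bool" where
  "maximal_subgroup G H \<longleftrightarrow> subgroup H G \<and> H \<noteq> carrier G \<and>
     (\<forall>K. subgroup K G \<and> H \<subseteq> K \<and> K \<noteq> carrier G \<longrightarrow> K = H)"

text \<open>Frattini subgroup: intersection of all maximal subgroups (= the whole group if there are none).\<close>
definition frattini :: "('a, 'b) monoid_scheme \<Rightarrow> 'a set" where
  "frattini G = carrier G \<inter> \<Inter>{H. maximal_subgroup G H}"

definition extraspecial :: "('a, 'b) monoid_scheme \<Rightarrow> bool" where
  "extraspecial G \<longleftrightarrow> center G = commutator_subgroup G \<and> commutator_subgroup G = frattini G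
     \<and> card (center G) = 2"

definition almost_extraspecial :: "('a, 'b) monoid_scheme \<Rightarrow> bool" where
  "almost_extraspecial G \<longleftrightarrow> commutator_subgroup G = frattini G \<and> card (commutator_subgroup G) = 2
     \<and> G\<lparr>carrier := center G\<rparr> \<cong> integer_mod_group 4"

text \<open>s_k(G) with 2^k given as m: number of subgroups of order m.\<close>
definition num_subgroups_of_order :: "('a, 'b) monoid_scheme \<Rightarrow> nat \<Rightarrow> nat" where
  "num_subgroups_of_order G m = card {H. subgroup H G \<and> card H = m}"

text \<open>Dihedral group of order 8: (a, b) stands for r^a s^b, with r^4 = s^2 = 1, s r s = r^-1.\<close>
definition D8 :: "(int \<times> bool) monoid" where
  "D8 = \<lparr>carrier = {0..<4} \<times> UNIV,
         monoid.mult = (\<lambda>(a, b) (c, d). ((if b then a - c else a + c) mod 4, b \<noteq> d)),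
         one = (0, False)\<rparr>"

definition C2_pow :: "nat \<Rightarrow> int list monoid" where
  "C2_pow m = DirProd_list (replicate m (integer_mod_group 2))"

definition D8_times_C2_pow :: "nat \<Rightarrow> ((int \<times> bool) \<times> int list) monoid" where
  "D8_times_C2_pow m = D8 \<times>\<times> C2_pow m"

end

theory Submission
  imports Defs
begin

context group begin

fun sp :: "'a set \<Rightarrow> 'a list \<Rightarrow> 'a set" where
  "sp Z [] = Z"
| "sp Z (x # xs) = sp Z xs \<union> (\<lambda>s. x \<otimes> s) ` sp Z xs"

fun indep :: "'a set \<Rightarrow> 'a set \<Rightarrow> 'a list \<Rightarrow> bool" where
  "indep P Z [] = True"
| "indep P Z (x # xs) = (x \<in> P \<and> x \<notin> sp Z xs \<and> indep P Z xs)"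

definition elem_rel :: "'a set \<Rightarrow> 'a set \<Rightarrow> bool" where
  "elem_rel P Z \<longleftrightarrow> subgroup P G \<and> subgroup Z G \<and> Z \<subseteq> P \<and> (\<forall>x\<in>P. x \<otimes> x \<in> Z)
     \<and> (\<forall>x\<in>P. \<forall>y\<in>P. \<exists>c\<in>Z. x \<otimes> y = y \<otimes> x \<otimes> c)"

lemma sp_sub:
  assumes "subgroup H G" "Z \<subseteq> H" "set xs \<subseteq> H"
  shows "sp Z xs \<subseteq> H"
  using assms(3) proof (induction xs)
  case Nil then show ?case using assms by simp
next
  case (Cons x xs)
  then have "sp Z xs \<subseteq> H" "x \<in> H" by auto
  then show ?case using subgroup.m_closed[OF assms(1)] by auto
qed

lemma step_subgroup:
  assumes er: "elem_rel P Z" and S: "subgroup S G" "Z \<subseteq> S" "S \<subseteq> P" and x: "x \<in> P" "x \<notin> S"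
  shows "subgroup (S \<union> (\<lambda>s. x \<otimes> s) ` S) G"
proof -
  have P: "subgroup P G" and Zs: "subgroup Z G" and sq: "\<And>a. a \<in> P \<Longrightarrow> a \<otimes> a \<in> Z"
    and rel: "\<And>a b. a \<in> P \<Longrightarrow> b \<in> P \<Longrightarrow> \<exists>c\<in>Z. a \<otimes> b = b \<otimes> a \<otimes> c"
    using er unfolding elem_rel_def by auto
  have SG: "S \<subseteq> carrier G" using S(1) subgroup.subset by blast
  have ZG: "Z \<subseteq> carrier G" using Zs subgroup.subset by blast
  have xG: "x \<in> carrier G" using x(1) P subgroup.subset by blast
  have Sm: "\<And>a b. a \<in> S \<Longrightarrow> b \<in> S \<Longrightarrow> a \<otimes> b \<in> S" by (rule subgroup.m_closed[OF S(1)])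
  have Si: "\<And>a. a \<in> S \<Longrightarrow> inv a \<in> S" by (rule subgroup.m_inv_closed[OF S(1)])
  have swap: "\<exists>s'\<in>S. a \<otimes> x = x \<otimes> s'" if a: "a \<in> S" for a
  proof -
    obtain c where c: "c \<in> Z" "a \<otimes> x = x \<otimes> a \<otimes> c" using rel[of a x] a S(3) x(1) by blast
    have "a \<otimes> c \<in> S" using Sm a c(1) S(2) by blast
    moreover have "a \<otimes> x = x \<otimes> (a \<otimes> c)" using c a SG ZG xG by (simp add: m_assoc subset_iff)
    ultimately show ?thesis by blast
  qed
  show ?thesis
  proof (rule subgroupI)
    show "S \<union> (\<otimes>) x ` S \<subseteq> carrier G" using SG xG by auto
    show "S \<union> (\<otimes>) x ` S \<noteq> {}" using subgroup.one_closed[OF S(1)] by auto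
  next
    fix a assume a: "a \<in> S \<union> (\<otimes>) x ` S"
    show "inv a \<in> S \<union> (\<otimes>) x ` S"
    proof (cases "a \<in> S")
      case True then show ?thesis using Si by auto
    next
      case False
      then obtain s where s: "s \<in> S" "a = x \<otimes> s" using a by auto
      have sG: "s \<in> carrier G" using s SG by auto
      obtain s' where s': "s' \<in> S" "inv s \<otimes> x = x \<otimes> s'" using swap[of "inv s"] Si s(1) by blast
      have xx: "x \<otimes> x \<in> S" using sq x(1) S(2) by blast
      have ix: "inv x = x \<otimes> inv (x \<otimes> x)" using xG by (simp add: inv_mult_group m_assoc[symmetric])
      have "inv a = inv s \<otimes> inv x" using s sG xG by (simp add: inv_mult_group)
      also have "\<dots> = (inv s \<otimes> x) \<otimes> inv (x \<otimes> x)" using sG xG by (subst ix) (simp add: m_assoc subset_iff)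
      also have "\<dots> = x \<otimes> (s' \<otimes> inv (x \<otimes> x))" using s' xG SG by (simp add: m_assoc subset_iff)
      finally have E: "inv a = x \<otimes> (s' \<otimes> inv (x \<otimes> x))" .
      have "s' \<otimes> inv (x \<otimes> x) \<in> S" using Sm[OF s'(1) Si[OF xx]] .
      then show ?thesis unfolding E by blast
    qed
  next
    fix a b assume a: "a \<in> S \<union> (\<otimes>) x ` S" and b: "b \<in> S \<union> (\<otimes>) x ` S"
    show "a \<otimes> b \<in> S \<union> (\<otimes>) x ` S"
    proof (cases "a \<in> S")
      case aS: True
      show ?thesis
      proof (cases "b \<in> S")
        case True then show ?thesis using Sm aS by auto
      next
        case False
        then obtain s where s: "s \<in> S" "b = x \<otimes> s" using b by auto
        obtain s' where s': "s' \<in> S" "a \<otimes> x = x \<otimes> s'" using swap aS by blast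
        have "a \<otimes> b = (a \<otimes> x) \<otimes> s" using s aS SG xG by (simp add: m_assoc subset_iff)
        also have "\<dots> = x \<otimes> (s' \<otimes> s)" using s' s SG xG by (simp add: m_assoc subset_iff)
        finally have E: "a \<otimes> b = x \<otimes> (s' \<otimes> s)" .
        have "s' \<otimes> s \<in> S" using Sm[OF s'(1) s(1)] .
        then show ?thesis unfolding E by blast
      qed
    next
      case aN: False
      then obtain t where t: "t \<in> S" "a = x \<otimes> t" using a by auto
      show ?thesis
      proof (cases "b \<in> S")
        case True
        have E: "a \<otimes> b = x \<otimes> (t \<otimes> b)" using t True SG xG by (simp add: m_assoc subset_iff)
        have "t \<otimes> b \<in> S" using Sm[OF t(1) True] .
        then show ?thesis unfolding E by blast
      next
        case False
        then obtain s where s: "s \<in> S" "b = x \<otimes> s" using b by auto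
        obtain s' where s': "s' \<in> S" "t \<otimes> x = x \<otimes> s'" using swap t(1) by blast
        have "a \<otimes> b = x \<otimes> (t \<otimes> x) \<otimes> s" using s t SG xG by (simp add: m_assoc subset_iff)
        also have "\<dots> = (x \<otimes> x) \<otimes> (s' \<otimes> s)" using s' s SG xG by (simp add: m_assoc subset_iff)
        finally have E: "a \<otimes> b = (x \<otimes> x) \<otimes> (s' \<otimes> s)" .
        have "(x \<otimes> x) \<otimes> (s' \<otimes> s) \<in> S" using Sm[OF _ Sm[OF s'(1) s(1)]] sq[OF x(1)] S(2) by blast
        then show ?thesis unfolding E by blast
      qed
    qed
  qed
qed

lemma step_card:
  assumes S: "S \<subseteq> carrier G" "finite S" "subgroup S G" and x: "x \<in> carrier G" "x \<notin> S"
  shows "card (S \<union> (\<lambda>s. x \<otimes> s) ` S) = 2 * card S"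
proof -
  have disj: "S \<inter> (\<lambda>s. x \<otimes> s) ` S = {}"
  proof (rule ccontr)
    assume "S \<inter> (\<otimes>) x ` S \<noteq> {}"
    then obtain s where s: "s \<in> S" "x \<otimes> s \<in> S" by auto
    then have "x \<otimes> s \<otimes> inv s \<in> S" using subgroup.m_closed[OF S(3)] subgroup.m_inv_closed[OF S(3)] by blast
    then show False using s S(1) x by (simp add: m_assoc subset_iff)
  qed
  have inj: "inj_on (\<lambda>s. x \<otimes> s) S" using S(1) x by (auto simp: inj_on_def subset_iff l_cancel)
  have "card (S \<union> (\<lambda>s. x \<otimes> s) ` S) = card S + card ((\<lambda>s. x \<otimes> s) ` S)"
    using disj S(2) by (simp add: card_Un_disjoint)
  then show ?thesis using card_image[OF inj] by simp
qed

lemma sp_props: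
  assumes er: "elem_rel P Z" and fin: "finite P" and ind: "indep P Z xs"
  shows "subgroup (sp Z xs) G \<and> Z \<subseteq> sp Z xs \<and> sp Z xs \<subseteq> P \<and> card (sp Z xs) = card Z * 2 ^ length xs"
  using ind proof (induction xs)
  case Nil then show ?case using er unfolding elem_rel_def by auto
next
  case (Cons x xs)
  then have IH: "subgroup (sp Z xs) G" "Z \<subseteq> sp Z xs" "sp Z xs \<subseteq> P" "card (sp Z xs) = card Z * 2 ^ length xs"
    and x: "x \<in> P" "x \<notin> sp Z xs" by auto
  have P: "subgroup P G" using er unfolding elem_rel_def by auto
  have xG: "x \<in> carrier G" using x P subgroup.subset by blast
  have sG: "sp Z xs \<subseteq> carrier G" using IH(1) subgroup.subset by blast
  have "subgroup (sp Z (x # xs)) G" using step_subgroup[OF er IH(1-3) x] by simp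
  moreover have "sp Z (x # xs) \<subseteq> P" using IH(3) x(1) subgroup.m_closed[OF P] by auto
  moreover have "card (sp Z (x # xs)) = card Z * 2 ^ length (x # xs)"
    using step_card[OF sG finite_subset[OF IH(3) fin] IH(1) xG x(2)] IH(4) by simp
  ultimately show ?case using IH(2) by auto
qed


lemma Z_sp: "Z \<subseteq> sp Z xs"
  by (induction xs) auto

lemma indep_set: "indep P Z xs \<Longrightarrow> set xs \<subseteq> P"
  by (induction xs) auto

lemma indep_mono: "indep P Z xs \<Longrightarrow> set xs \<subseteq> H \<Longrightarrow> indep H Z xs"
  by (induction xs) auto

lemma set_sp: "\<one> \<in> Z \<Longrightarrow> set xs \<subseteq> carrier G \<Longrightarrow> set xs \<subseteq> sp Z xs"
proof (induction xs)
  case Nil then show ?case by simp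
next
  case (Cons x xs)
  have "\<one> \<in> sp Z xs" using Cons(2) Z_sp by blast
  then have "x \<otimes> \<one> \<in> sp Z (x # xs)" by simp
  then have "x \<in> sp Z (x # xs)" using Cons(3) by simp
  then show ?case using Cons by auto
qed

definition Tup :: "'a set \<Rightarrow> 'a set \<Rightarrow> nat \<Rightarrow> 'a list set" where
  "Tup P Z j = {xs. length xs = j \<and> indep P Z xs}"

lemma Tup_finite: "finite P \<Longrightarrow> finite (Tup P Z j)"
  by (rule finite_subset[of _ "{xs. set xs \<subseteq> P \<and> length xs = j}"])
     (auto simp: Tup_def dest: indep_set intro: finite_lists_length_eq)

lemma Tup_Suc: "Tup P Z (Suc j) = (\<Union>xs\<in>Tup P Z j. (\<lambda>x. x # xs) ` (P - sp Z xs))"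
  by (auto simp: Tup_def length_Suc_conv)

lemma card_Tup:
  assumes er: "elem_rel P Z" and fin: "finite P"
  shows "card (Tup P Z j) = (\<Prod>i<j. card P - card Z * 2^i)"
proof (induction j)
  case 0
  have "Tup P Z 0 = {[]}" by (auto simp: Tup_def)
  then show ?case by simp
next
  case (Suc j)
  have c: "card ((\<lambda>x. x # xs) ` (P - sp Z xs)) = card P - card Z * 2^j" if xs: "xs \<in> Tup P Z j" for xs
  proof -
    have ind: "indep P Z xs" "length xs = j" using xs by (auto simp: Tup_def)
    note sp = sp_props[OF er fin ind(1)]
    have spP: "sp Z xs \<subseteq> P" using sp by blast
    have "card ((\<lambda>x. x # xs) ` (P - sp Z xs)) = card (P - sp Z xs)"
      by (rule card_image) (auto simp: inj_on_def)
    also have "\<dots> = card P - card (sp Z xs)" using card_Diff_subset[OF finite_subset[OF spP fin] spP] .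
    finally show ?thesis using sp ind by simp
  qed
  have "card (Tup P Z (Suc j)) = (\<Sum>xs\<in>Tup P Z j. card ((\<lambda>x. x # xs) ` (P - sp Z xs)))"
    unfolding Tup_Suc
    by (rule card_UN_disjoint) (auto simp: Tup_finite fin)
  also have "\<dots> = (\<Sum>xs\<in>Tup P Z j. card P - card Z * 2^j)" using c by simp
  also have "\<dots> = card (Tup P Z j) * (card P - card Z * 2^j)" by simp
  finally show ?case using Suc by simp
qed

definition Subs :: "'a set \<Rightarrow> 'a set \<Rightarrow> nat \<Rightarrow> 'a set set" where
  "Subs P Z j = {H. subgroup H G \<and> Z \<subseteq> H \<and> H \<subseteq> P \<and> card H = card Z * 2^j}"

lemma elem_rel_sub: "elem_rel P Z \<Longrightarrow> subgroup H G \<Longrightarrow> Z \<subseteq> H \<Longrightarrow> H \<subseteq> P \<Longrightarrow> elem_rel H Z"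
  unfolding elem_rel_def by blast

lemma card_Tup_Subs:
  assumes er: "elem_rel P Z" and fin: "finite P"
  shows "card (Tup P Z j) = card (Subs P Z j) * (\<Prod>i<j. card Z * 2^j - card Z * 2^i)"
proof -
  have ZG: "subgroup Z G" using er unfolding elem_rel_def by auto
  have one: "\<one> \<in> Z" using subgroup.one_closed[OF ZG] .
  have PG: "P \<subseteq> carrier G" using er unfolding elem_rel_def by (auto dest: subgroup.subset)
  have eq: "Tup P Z j = (\<Union>H\<in>Subs P Z j. Tup H Z j)"
  proof
    show "Tup P Z j \<subseteq> (\<Union>H\<in>Subs P Z j. Tup H Z j)"
    proof
      fix xs assume xs: "xs \<in> Tup P Z j"
      then have ind: "indep P Z xs" "length xs = j" by (auto simp: Tup_def)
      note sp = sp_props[OF er fin ind(1)]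
      have "sp Z xs \<in> Subs P Z j" using sp ind by (auto simp: Subs_def)
      moreover have "xs \<in> Tup (sp Z xs) Z j"
        using indep_mono[OF ind(1) set_sp[OF one]] indep_set[OF ind(1)] PG ind(2) by (auto simp: Tup_def)
      ultimately show "xs \<in> (\<Union>H\<in>Subs P Z j. Tup H Z j)" by blast
    qed
    show "(\<Union>H\<in>Subs P Z j. Tup H Z j) \<subseteq> Tup P Z j"
      by (auto simp: Tup_def Subs_def) (meson indep_mono indep_set order_trans)
  qed
  have uniq: "sp Z xs = H" if H: "H \<in> Subs P Z j" and xs: "xs \<in> Tup H Z j" for H xs
  proof -
    have HP: "subgroup H G" "Z \<subseteq> H" "H \<subseteq> P" "card H = card Z * 2^j" using H by (auto simp: Subs_def)
    have erH: "elem_rel H Z" using elem_rel_sub[OF er HP(1-3)] .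
    have finH: "finite H" using HP(3) fin finite_subset by blast
    have ind: "indep H Z xs" "length xs = j" using xs by (auto simp: Tup_def)
    note sp = sp_props[OF erH finH ind(1)]
    show ?thesis using card_subset_eq[OF finH] sp ind HP by auto
  qed
  have finS: "finite (Subs P Z j)"
    by (rule finite_subset[of _ "Pow P"]) (auto simp: Subs_def fin)
  have "card (Tup P Z j) = (\<Sum>H\<in>Subs P Z j. card (Tup H Z j))"
    unfolding eq
  proof (rule card_UN_disjoint[OF finS])
    show "\<forall>H\<in>Subs P Z j. finite (Tup H Z j)"
      using fin by (auto simp: Subs_def intro!: Tup_finite intro: finite_subset)
    show "\<forall>H\<in>Subs P Z j. \<forall>H'\<in>Subs P Z j. H \<noteq> H' \<longrightarrow> Tup H Z j \<inter> Tup H' Z j = {}"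
      using uniq by blast
  qed
  also have "\<dots> = (\<Sum>H\<in>Subs P Z j. (\<Prod>i<j. card Z * 2^j - card Z * 2^i))"
  proof (rule sum.cong[OF refl])
    fix H assume H: "H \<in> Subs P Z j"
    have HP: "subgroup H G" "Z \<subseteq> H" "H \<subseteq> P" "card H = card Z * 2^j" using H by (auto simp: Subs_def)
    have erH: "elem_rel H Z" using elem_rel_sub[OF er HP(1-3)] .
    have finH: "finite H" using HP(3) fin finite_subset by blast
    show "card (Tup H Z j) = (\<Prod>i<j. card Z * 2^j - card Z * 2^i)"
      using card_Tup[OF erH finH] HP(4) by simp
  qed
  also have "\<dots> = card (Subs P Z j) * (\<Prod>i<j. card Z * 2^j - card Z * 2^i)" by simp
  finally show ?thesis .
qed

end

fun Ng :: "nat \<Rightarrow> nat \<Rightarrow> nat" where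
  "Ng d 0 = 1"
| "Ng 0 (Suc k) = 0"
| "Ng (Suc d) (Suc k) = Ng d k + 2^(Suc k) * Ng d (Suc k)"

definition Pr :: "nat \<Rightarrow> nat \<Rightarrow> nat" where "Pr d j = (\<Prod>i<j. 2^d - 2^i)"

lemma Pr_pos: "Pr j j > 0"
  unfolding Pr_def by (auto intro!: prod_pos simp: power_strict_increasing_iff)

lemma Pr_Suc_Suc: "Pr (Suc d) (Suc k) = (2^Suc d - 1) * 2^k * Pr d k"
proof -
  have "Pr (Suc d) (Suc k) = (\<Prod>i<Suc k. 2^Suc d - 2^i)" by (simp add: Pr_def)
  also have "\<dots> = (2^Suc d - 2^0) * (\<Prod>i<k. 2^Suc d - 2^Suc i)" by (rule prod.lessThan_Suc_shift)
  also have "(\<Prod>i<k. 2^Suc d - 2^Suc i) = (\<Prod>i<k. 2 * (2^d - 2^i :: nat))"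
    by (rule prod.cong) (auto simp: right_diff_distrib')
  also have "\<dots> = 2^k * Pr d k" by (simp add: Pr_def prod.distrib)
  finally show ?thesis by simp
qed

lemma Pr_Suc: "Pr d (Suc k) = Pr d k * (2^d - 2^k)"
  by (simp add: Pr_def)

lemma Pr_zero: "d < k \<Longrightarrow> Pr d k = 0"
  unfolding Pr_def by (rule prod_zero) auto

lemma arith_aux:
  fixes A B P :: nat
  assumes "A \<le> B" "1 \<le> A"
  shows "(2 * B - 1) * A * P = (2 * A - 1) * A * P + 2 * A * (P * (B - A))"
proof -
  show ?thesis
    by (rule of_nat_eq_iff[where 'a=int, THEN iffD1]) (use assms in \<open>simp add: of_nat_diff algebra_simps\<close>)
qed

lemma Pr_Ng: "Pr d j = Ng d j * Pr j j"
proof (induction d arbitrary: j)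
  case 0
  then show ?case
  proof (cases j)
    case 0 then show ?thesis by (simp add: Pr_def)
  next
    case (Suc k) then show ?thesis using Pr_zero[of 0 j] by simp
  qed
next
  case (Suc d)
  show ?case
  proof (cases j)
    case 0 then show ?thesis by (simp add: Pr_def)
  next
    case (Suc k)
    have IH1: "Pr d k = Ng d k * Pr k k" using Suc.IH .
    have IH2: "Pr d (Suc k) = Ng d (Suc k) * Pr (Suc k) (Suc k)" using Suc.IH .
    have "Ng (Suc d) (Suc k) * Pr (Suc k) (Suc k)
        = Ng d k * ((2^Suc k - 1) * 2^k * Pr k k) + 2^Suc k * (Ng d (Suc k) * Pr (Suc k) (Suc k))"
      by (simp add: Pr_Suc_Suc algebra_simps)
    also have "\<dots> = (2^Suc k - 1) * 2^k * Pr d k + 2^Suc k * (Pr d k * (2^d - 2^k))"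
      using IH1 IH2 Pr_Suc by (simp add: algebra_simps)
    also have "\<dots> = (2^Suc d - 1) * 2^k * Pr d k"
    proof (cases "k \<le> d")
      case True
      have "(2 * 2^d - 1) * 2^k * Pr d k = (2 * 2^k - 1) * 2^k * Pr d k + 2 * 2^k * (Pr d k * (2^d - 2^k))"
        by (rule arith_aux) (use True in \<open>auto simp: power_increasing\<close>)
      then show ?thesis by simp
    next
      case False then show ?thesis using Pr_zero[of d k] by simp
    qed
    finally show ?thesis using Suc Pr_Suc_Suc by simp
  qed
qed

context group begin

lemma card_Subs:
  assumes er: "elem_rel P Z" and fin: "finite P" and cP: "card P = card Z * 2^d"
  shows "card (Subs P Z j) = Ng d j"
proof -
  have ZG: "subgroup Z G" and ZP: "Z \<subseteq> P" using er unfolding elem_rel_def by auto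
  have cz: "card Z > 0" using subgroup.one_closed[OF ZG] finite_subset[OF ZP fin] card_gt_0_iff by blast
  have pr: "(\<Prod>i<j. card Z * 2^a - card Z * 2^i) = card Z ^ j * Pr a j" for a
    by (simp add: Pr_def right_diff_distrib'[symmetric] prod.distrib)
  have "card (Subs P Z j) * (card Z ^ j * Pr j j) = card (Tup P Z j)"
    using card_Tup_Subs[OF er fin, of j] pr[of j] by simp
  also have "\<dots> = card Z ^ j * Pr d j"
    using card_Tup[OF er fin, of j] cP pr[of d] by simp
  also have "\<dots> = Ng d j * (card Z ^ j * Pr j j)" using Pr_Ng[of d j] by simp
  finally have "card (Subs P Z j) * (card Z ^ j * Pr j j) = Ng d j * (card Z ^ j * Pr j j)" .
  moreover have "card Z ^ j * Pr j j > 0" using cz Pr_pos[of j] by simp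
  ultimately show ?thesis using mult_right_cancel by (metis less_not_refl)
qed

end


context group begin

lemma basis_exists:
  assumes er: "elem_rel P Z" and fin: "finite P" and cP: "card P = card Z * 2^j"
  shows "\<exists>ws. indep P Z ws \<and> length ws = j \<and> sp Z ws = P"
proof -
  have ZG: "subgroup Z G" and ZP: "Z \<subseteq> P" using er unfolding elem_rel_def by auto
  have cz: "card Z > 0" using subgroup.one_closed[OF ZG] finite_subset[OF ZP fin] card_gt_0_iff by blast
  have "card (Tup P Z j) = (\<Prod>i<j. card Z * 2^j - card Z * 2^i)" using card_Tup[OF er fin] cP by simp
  also have "\<dots> > 0" using cz by (auto intro!: prod_pos simp: power_strict_increasing_iff)
  finally obtain ws where ws: "ws \<in> Tup P Z j" by (metis card.empty ex_in_conv less_irrefl)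
  then have ind: "indep P Z ws" "length ws = j" by (auto simp: Tup_def)
  note sp = sp_props[OF er fin ind(1)]
  have "sp Z ws = P" using card_subset_eq[OF fin] sp ind cP by auto
  then show ?thesis using ind by blast
qed

lemma indep_transfer:
  assumes er: "elem_rel P Z" and fin: "finite P" and Z': "Z' \<subseteq> Z"
  shows "indep P Z ws \<Longrightarrow> length hs = length ws \<Longrightarrow>
     (\<forall>i<length ws. hs!i \<in> Q \<and> (\<exists>c\<in>Z. hs!i = ws!i \<otimes> c)) \<Longrightarrow> indep Q Z' hs"
proof (induction ws arbitrary: hs)
  case Nil then show ?case by simp
next
  case (Cons w ws)
  obtain h hs' where hs: "hs = h # hs'" using Cons(3) by (cases hs) auto
  have ind: "indep P Z ws" "w \<in> P" "w \<notin> sp Z ws" using Cons(2) by auto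
  have len: "length hs' = length ws" using Cons(3) hs by simp
  have cond: "\<forall>i<length ws. hs'!i \<in> Q \<and> (\<exists>c\<in>Z. hs'!i = ws!i \<otimes> c)"
  proof (intro allI impI)
    fix i assume "i < length ws"
    then have "Suc i < length (w # ws)" by simp
    from Cons(4)[rule_format, OF this] show "hs'!i \<in> Q \<and> (\<exists>c\<in>Z. hs'!i = ws!i \<otimes> c)" using hs by simp
  qed
  have IH: "indep Q Z' hs'" using Cons.IH[OF ind(1) len cond] .
  obtain c where c: "c \<in> Z" "h = w \<otimes> c" "h \<in> Q" using Cons(4) hs by auto
  note sp = sp_props[OF er fin ind(1)]
  have PG: "P \<subseteq> carrier G" using er unfolding elem_rel_def by (auto dest: subgroup.subset)
  have ZG: "subgroup Z G" using er unfolding elem_rel_def by auto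
  have wsG: "set ws \<subseteq> carrier G" using indep_set[OF ind(1)] PG by auto
  have wsS: "set ws \<subseteq> sp Z ws" using set_sp[OF subgroup.one_closed[OF ZG] wsG] .
  have hsS: "set hs' \<subseteq> sp Z ws"
  proof
    fix x assume "x \<in> set hs'"
    then obtain i where i: "i < length hs'" "x = hs'!i" by (auto simp: in_set_conv_nth)
    then obtain c' where "c' \<in> Z" "x = ws!i \<otimes> c'" using cond len by auto
    moreover have "ws!i \<in> sp Z ws" using wsS i len by auto
    ultimately show "x \<in> sp Z ws" using sp subgroup.m_closed[of "sp Z ws" G] by blast
  qed
  have sub: "sp Z' hs' \<subseteq> sp Z ws" using sp_sub[of "sp Z ws" Z' hs'] sp Z' hsS by blast
  have "h \<notin> sp Z' hs'"
  proof
    assume "h \<in> sp Z' hs'"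
    then have hS: "h \<in> sp Z ws" using sub by blast
    have cG: "c \<in> carrier G" using c ZG subgroup.subset by blast
    have wG: "w \<in> carrier G" using ind PG by auto
    have "h \<otimes> inv c \<in> sp Z ws"
      using hS c(1) sp subgroup.m_closed[of "sp Z ws" G] subgroup.m_inv_closed[of "sp Z ws" G] by blast
    moreover have "h \<otimes> inv c = w" using c cG wG by (simp add: m_assoc)
    ultimately show False using ind(3) by simp
  qed
  then show ?case using IH hs c(3) by simp
qed

lemma card_choice_lists:
  assumes "\<And>w. finite (S w)" "\<And>w. card (S w) \<le> b"
  shows "finite {hs. length hs = length ws \<and> (\<forall>i<length ws. hs!i \<in> S (ws!i))} \<and>
         card {hs. length hs = length ws \<and> (\<forall>i<length ws. hs!i \<in> S (ws!i))} \<le> b ^ length ws"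
proof (induction ws)
  case Nil
  have "{hs. length hs = length [] \<and> (\<forall>i<length []. hs!i \<in> S ([]!i))} = {[]}" by auto
  then show ?case by simp
next
  case (Cons w ws)
  let ?L = "\<lambda>ws. {hs. length hs = length ws \<and> (\<forall>i<length ws. hs!i \<in> S (ws!i))}"
  have sub: "?L (w # ws) \<subseteq> (\<lambda>(h, hs). h # hs) ` (S w \<times> ?L ws)"
  proof
    fix hs assume hsL: "hs \<in> ?L (w # ws)"
    then have len: "length hs = Suc (length ws)" by simp
    then obtain h hs' where hs0: "hs = h # hs'" by (cases hs) auto
    have h: "h \<in> S w" using hsL hs0 by fastforce
    have t: "\<forall>i<length ws. hs'!i \<in> S (ws!i)"
    proof (intro allI impI)
      fix i assume "i < length ws"
      then have "Suc i < length (w # ws)" by simp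
      then have "hs ! Suc i \<in> S ((w # ws) ! Suc i)" using hsL by blast
      then show "hs'!i \<in> S (ws!i)" using hs0 by simp
    qed
    have hs: "hs = h # hs'" "length hs' = length ws" "h \<in> S w" "\<forall>i<length ws. hs'!i \<in> S (ws!i)"
      using hs0 len h t by auto
    then show "hs \<in> (\<lambda>(h, hs). h # hs) ` (S w \<times> ?L ws)" by auto
  qed
  have fin: "finite ((\<lambda>(h, hs). h # hs) ` (S w \<times> ?L ws))" using Cons assms by auto
  have "card (?L (w # ws)) \<le> card ((\<lambda>(h, hs). h # hs) ` (S w \<times> ?L ws))"
    using card_mono[OF fin sub] .
  also have "\<dots> \<le> card (S w \<times> ?L ws)" by (rule card_image_le) (use Cons assms in auto)
  also have "\<dots> = card (S w) * card (?L ws)" by (simp add: card_cartesian_product)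
  also have "\<dots> \<le> b * b ^ length ws" using Cons assms by (simp add: mult_le_mono)
  finally show ?case using finite_subset[OF sub fin] by simp
qed

definition prodset :: "'a set \<Rightarrow> 'a set \<Rightarrow> 'a set" where
  "prodset H C = {h \<otimes> c |h c. h \<in> H \<and> c \<in> C}"

lemma prodset_subgroup:
  assumes H: "subgroup H G" and C: "subgroup C G"
    and sw: "\<And>c h. c \<in> C \<Longrightarrow> h \<in> H \<Longrightarrow> \<exists>c'\<in>C. c \<otimes> h = h \<otimes> c'"
  shows "subgroup (prodset H C) G"
proof -
  have HG: "H \<subseteq> carrier G" and CG: "C \<subseteq> carrier G" using H C subgroup.subset by blast+
  show ?thesis
  proof (rule subgroupI)
    show "prodset H C \<subseteq> carrier G" using HG CG by (auto simp: prodset_def)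
    have "\<one> \<otimes> \<one> \<in> prodset H C" unfolding prodset_def
      using subgroup.one_closed[OF H] subgroup.one_closed[OF C] by blast
    then show "prodset H C \<noteq> {}" by blast
  next
    fix a assume "a \<in> prodset H C"
    then obtain h c where hc: "h \<in> H" "c \<in> C" "a = h \<otimes> c" by (auto simp: prodset_def)
    obtain c' where c': "c' \<in> C" "inv c \<otimes> inv h = inv h \<otimes> c'"
      using sw[of "inv c" "inv h"] hc subgroup.m_inv_closed[OF H] subgroup.m_inv_closed[OF C] by blast
    have "inv a = inv h \<otimes> c'" using hc c' HG CG by (auto simp: inv_mult_group subset_iff)
    then show "inv a \<in> prodset H C" unfolding prodset_def using subgroup.m_inv_closed[OF H] hc c' by blast
  next
    fix a b assume "a \<in> prodset H C" "b \<in> prodset H C"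
    then obtain h c h' c' where hc: "h \<in> H" "c \<in> C" "a = h \<otimes> c" "h' \<in> H" "c' \<in> C" "b = h' \<otimes> c'"
      by (auto simp: prodset_def)
    obtain c'' where c'': "c'' \<in> C" "c \<otimes> h' = h' \<otimes> c''" using sw hc by blast
    have "a \<otimes> b = h \<otimes> (c \<otimes> h') \<otimes> c'" using hc HG CG by (simp add: m_assoc subset_iff)
    also have "\<dots> = (h \<otimes> h') \<otimes> (c'' \<otimes> c')" using c'' hc HG CG by (simp add: m_assoc subset_iff)
    finally have E: "a \<otimes> b = (h \<otimes> h') \<otimes> (c'' \<otimes> c')" .
    have "h \<otimes> h' \<in> H" "c'' \<otimes> c' \<in> C"
      using subgroup.m_closed[OF H] subgroup.m_closed[OF C] hc c'' by auto
    then show "a \<otimes> b \<in> prodset H C" unfolding E prodset_def by blast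
  qed
qed

lemma prodset_card:
  assumes H: "subgroup H G" and C: "subgroup C G" and fH: "finite H" and fC: "finite C"
    and int: "H \<inter> C = {\<one>}"
  shows "card (prodset H C) = card H * card C"
proof -
  have HG: "H \<subseteq> carrier G" and CG: "C \<subseteq> carrier G" using H C subgroup.subset by blast+
  have eq: "prodset H C = (\<lambda>(h, c). h \<otimes> c) ` (H \<times> C)" by (auto simp: prodset_def)
  have "inj_on (\<lambda>(h, c). h \<otimes> c) (H \<times> C)"
  proof (rule inj_onI, clarsimp)
    fix h c h' c' assume a: "h \<in> H" "c \<in> C" "h' \<in> H" "c' \<in> C" "h \<otimes> c = h' \<otimes> c'"
    have hG: "h \<in> carrier G" "h' \<in> carrier G" "c \<in> carrier G" "c' \<in> carrier G" using a HG CG by auto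
    have "inv h' \<otimes> h = c' \<otimes> inv c"
    proof -
      have "inv h' \<otimes> h = inv h' \<otimes> (h \<otimes> c) \<otimes> inv c" using hG by (simp add: m_assoc)
      also have "\<dots> = inv h' \<otimes> (h' \<otimes> c') \<otimes> inv c" using a(5) by simp
      also have "\<dots> = c' \<otimes> inv c" using hG by (simp add: m_assoc[symmetric])
      finally show ?thesis .
    qed
    moreover have "inv h' \<otimes> h \<in> H" using subgroup.m_closed[OF H] subgroup.m_inv_closed[OF H] a by blast
    moreover have "c' \<otimes> inv c \<in> C" using subgroup.m_closed[OF C] subgroup.m_inv_closed[OF C] a by blast
    ultimately have e1: "inv h' \<otimes> h \<in> H \<inter> C" and e2: "c' \<otimes> inv c \<in> H \<inter> C" by auto
    have u1: "inv h' \<otimes> h = \<one>" using e1 int by blast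
    have u2: "c' \<otimes> inv c = \<one>" using e2 int by blast
    have "h = h' \<otimes> (inv h' \<otimes> h)" using hG by (simp add: m_assoc[symmetric])
    then have "h = h'" using u1 hG by simp
    moreover have "c' = (c' \<otimes> inv c) \<otimes> c" using hG by (simp add: m_assoc)
    then have "c' = c" using u2 hG by simp
    ultimately show "h = h' \<and> c = c'" by simp
  qed
  then have "card ((\<lambda>(h, c). h \<otimes> c) ` (H \<times> C)) = card (H \<times> C)" by (rule card_image)
  then show ?thesis unfolding eq by (simp add: card_cartesian_product)
qed

lemma prodset_sup:
  assumes "subgroup H G" "subgroup C G"
  shows "H \<subseteq> prodset H C" "C \<subseteq> prodset H C"
proof -
  have HG: "H \<subseteq> carrier G" and CG: "C \<subseteq> carrier G" using assms subgroup.subset by blast+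
  show "H \<subseteq> prodset H C"
  proof
    fix h assume h: "h \<in> H"
    have "h = h \<otimes> \<one>" using h HG by auto
    then show "h \<in> prodset H C" unfolding prodset_def using h subgroup.one_closed[OF assms(2)] by blast
  qed
  show "C \<subseteq> prodset H C"
  proof
    fix c assume c: "c \<in> C"
    have "c = \<one> \<otimes> c" using c CG by auto
    then show "c \<in> prodset H C" unfolding prodset_def using c subgroup.one_closed[OF assms(1)] by blast
  qed
qed

lemma prodset_in:
  assumes "subgroup Y G" "H \<subseteq> Y" "C \<subseteq> Y"
  shows "prodset H C \<subseteq> Y"
  using assms subgroup.m_closed[OF assms(1)] by (auto simp: prodset_def)

end


locale cls = group G for G (structure) +
  fixes z g0 :: 'a and n :: nat
  assumes fin: "finite (carrier G)" and cardG: "card (carrier G) = 2^n" and n3: "n \<ge> 3"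
  and zG: "z \<in> carrier G" and z1: "z \<noteq> \<one>" and zz: "z \<otimes> z = \<one>"
  and zc: "\<And>x. x \<in> carrier G \<Longrightarrow> z \<otimes> x = x \<otimes> z"
  and sq: "\<And>x. x \<in> carrier G \<Longrightarrow> x \<otimes> x = \<one> \<or> x \<otimes> x = z"
  and cm: "\<And>x y. x \<in> carrier G \<Longrightarrow> y \<in> carrier G \<Longrightarrow> x \<otimes> y = y \<otimes> x \<or> x \<otimes> y = y \<otimes> x \<otimes> z"
  and g0G: "g0 \<in> carrier G" and g0sq: "g0 \<otimes> g0 = z" and g0nc: "\<exists>y\<in>carrier G. y \<otimes> g0 \<noteq> g0 \<otimes> y"
begin

definition "Z0 = {\<one>, z}"
definition "CC = {\<one>, g0, z, g0 \<otimes> z}"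
definition "KK = {x \<in> carrier G. x \<otimes> g0 = g0 \<otimes> x}"
definition "BB k = {H. subgroup H G \<and> card H = 2^k \<and> z \<notin> H}"

lemma zinv: "inv z = z"
  using zz zG by (simp add: inv_equality)

lemma zz': "x \<in> carrier G \<Longrightarrow> z \<otimes> (z \<otimes> x) = x"
  using zz zG by (simp add: m_assoc[symmetric])

lemma zc': "x \<in> carrier G \<Longrightarrow> y \<in> carrier G \<Longrightarrow> x \<otimes> (z \<otimes> y) = z \<otimes> (x \<otimes> y)"
  using zG zc[of x] by (simp add: m_assoc[symmetric])

lemma g0g0': "x \<in> carrier G \<Longrightarrow> g0 \<otimes> (g0 \<otimes> x) = z \<otimes> x"
  using g0sq g0G by (simp add: m_assoc[symmetric])

lemma Z0_sub: "subgroup Z0 G"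
proof (rule subgroupI)
  show "Z0 \<subseteq> carrier G" "Z0 \<noteq> {}" using zG by (auto simp: Z0_def)
  show "inv a \<in> Z0" if "a \<in> Z0" for a using that zinv by (auto simp: Z0_def)
  show "a \<otimes> b \<in> Z0" if "a \<in> Z0" "b \<in> Z0" for a b using that zz zG by (auto simp: Z0_def)
qed

lemma card_Z0: "card Z0 = 2"
  using z1 by (auto simp: Z0_def)

lemma er_Z0: "elem_rel (carrier G) Z0"
  unfolding elem_rel_def
proof (intro conjI ballI)
  show "subgroup (carrier G) G" by (rule subgroup_self)
  show "subgroup Z0 G" by (rule Z0_sub)
  show "Z0 \<subseteq> carrier G" using zG by (auto simp: Z0_def)
  show "x \<otimes> x \<in> Z0" if "x \<in> carrier G" for x using sq[OF that] by (auto simp: Z0_def)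
  show "\<exists>c\<in>Z0. x \<otimes> y = y \<otimes> x \<otimes> c" if "x \<in> carrier G" "y \<in> carrier G" for x y
    using cm[OF that] that by (auto simp: Z0_def)
qed

lemma g0z: "z \<otimes> g0 = g0 \<otimes> z" using zc g0G by simp

lemma g0inv: "inv g0 = g0 \<otimes> z"
proof -
  have "(g0 \<otimes> z) \<otimes> g0 = \<one>" using g0G zG g0sq zz by (simp add: m_assoc g0z[symmetric])
  then show ?thesis using g0G zG by (simp add: inv_equality)
qed

lemma CC_elems: "\<one> \<noteq> g0" "\<one> \<noteq> z" "\<one> \<noteq> g0 \<otimes> z" "g0 \<noteq> z" "g0 \<noteq> g0 \<otimes> z" "z \<noteq> g0 \<otimes> z"
proof -
  show "\<one> \<noteq> z" using z1 by simp
  show "\<one> \<noteq> g0" using g0sq z1 by auto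
  show "g0 \<noteq> z" using g0sq zz z1 by auto
  show "g0 \<noteq> g0 \<otimes> z" using z1 g0G zG by simp
  show "z \<noteq> g0 \<otimes> z" using g0sq z1 g0G zG by auto
  show "\<one> \<noteq> g0 \<otimes> z"
  proof
    assume "\<one> = g0 \<otimes> z"
    then have "inv g0 = z" using g0G zG by (simp add: inv_equality m_assoc g0z[symmetric])
    then have "g0 = z" using g0inv g0G zG by (metis inv_inv zinv)
    then show False using \<open>g0 \<noteq> z\<close> by simp
  qed
qed

lemma CC_sp: "CC = sp Z0 [g0]"
  using g0G by (auto simp: CC_def Z0_def)

lemma CC_ind: "indep (carrier G) Z0 [g0]"
  using CC_elems g0G by (auto simp: Z0_def)

lemma card_CC: "card CC = 4"
  using sp_props[OF er_Z0 fin CC_ind] card_Z0 unfolding CC_sp by simp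

lemma CC_sub: "subgroup CC G"
  using sp_props[OF er_Z0 fin CC_ind] unfolding CC_sp by simp

lemma CC_G: "CC \<subseteq> carrier G" using g0G zG by (auto simp: CC_def)

lemma Z0_CC: "Z0 \<subseteq> CC" by (auto simp: Z0_def CC_def)

lemma er_CC: "elem_rel (carrier G) CC"
  using er_Z0 Z0_CC CC_sub CC_G unfolding elem_rel_def by blast


lemma pow_split: "(2::nat)^n = 4 * 2^(n-2) \<and> (2::nat)^n = 2 * 2^(n-1) \<and> (2::nat)^(n-1) = 4 * 2^(n-3)"
proof -
  obtain m where m0: "n = 3 + m" using le_Suc_ex[OF n3] by blast
  then have m: "n = Suc (Suc (Suc m))" by simp
  show ?thesis unfolding m by simp
qed

lemma KK_G: "KK \<subseteq> carrier G" by (auto simp: KK_def)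

lemma KK_mult:
  assumes x: "x \<in> carrier G" and y: "y \<in> carrier G"
  shows "(x \<otimes> y \<in> KK) \<longleftrightarrow> (x \<in> KK \<longleftrightarrow> y \<in> KK)"
proof -
  define e where "e u = (if u \<in> KK then \<one> else z)" for u
  have ex: "u \<otimes> g0 = g0 \<otimes> u \<otimes> e u" if "u \<in> carrier G" for u
    using cm[OF that g0G] that g0G by (auto simp: KK_def e_def)
  have eG: "e u \<in> carrier G" for u using zG by (simp add: e_def)
  have ec: "e u \<otimes> v = v \<otimes> e u" if "v \<in> carrier G" for u v using zc[OF that] that by (simp add: e_def)
  have "(x \<otimes> y) \<otimes> g0 = x \<otimes> (y \<otimes> g0)" using x y g0G by (simp add: m_assoc)
  also have "\<dots> = x \<otimes> (g0 \<otimes> y \<otimes> e y)" using ex[OF y] by simp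
  also have "\<dots> = (x \<otimes> g0) \<otimes> y \<otimes> e y" using x y g0G eG by (simp add: m_assoc)
  also have "\<dots> = (g0 \<otimes> x \<otimes> e x) \<otimes> y \<otimes> e y" using ex[OF x] by simp
  also have "\<dots> = g0 \<otimes> x \<otimes> (e x \<otimes> y) \<otimes> e y" using x y g0G eG by (simp add: m_assoc)
  also have "\<dots> = g0 \<otimes> x \<otimes> (y \<otimes> e x) \<otimes> e y" using ec[OF y] by simp
  also have "\<dots> = g0 \<otimes> (x \<otimes> y) \<otimes> (e x \<otimes> e y)" using x y g0G eG by (simp add: m_assoc)
  finally have E: "(x \<otimes> y) \<otimes> g0 = g0 \<otimes> (x \<otimes> y) \<otimes> (e x \<otimes> e y)" .
  have wG: "g0 \<otimes> (x \<otimes> y) \<in> carrier G" using x y g0G by simp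
  have "(x \<otimes> y \<in> KK) \<longleftrightarrow> e x \<otimes> e y = \<one>"
    using E wG eG x y by (simp add: KK_def)
  also have "\<dots> \<longleftrightarrow> (x \<in> KK \<longleftrightarrow> y \<in> KK)" using zz z1 zG by (simp add: e_def)
  finally show ?thesis .
qed

lemma one_KK: "\<one> \<in> KK" using g0G by (simp add: KK_def)

lemma inv_KK: "x \<in> carrier G \<Longrightarrow> (inv x \<in> KK) \<longleftrightarrow> (x \<in> KK)"
  using KK_mult[of x "inv x"] one_KK by auto

lemma KK_sub: "subgroup KK G"
proof (rule subgroupI)
  show "KK \<subseteq> carrier G" by (rule KK_G)
  show "KK \<noteq> {}" using one_KK by blast
  show "inv a \<in> KK" if "a \<in> KK" for a using inv_KK that KK_G by blast
  show "a \<otimes> b \<in> KK" if "a \<in> KK" "b \<in> KK" for a b using KK_mult that KK_G by blast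
qed

lemma index2:
  assumes S: "subgroup S G" "finite S" and s1: "s1 \<in> S" "s1 \<notin> KK"
  shows "S = (S \<inter> KK) \<union> (\<lambda>k. s1 \<otimes> k) ` (S \<inter> KK)" "card S = 2 * card (S \<inter> KK)"
proof -
  have SG: "S \<subseteq> carrier G" using S subgroup.subset by blast
  have s1G: "s1 \<in> carrier G" using s1 SG by blast
  have i1: "inv s1 \<notin> KK" using inv_KK[OF s1G] s1 by simp
  show eq: "S = (S \<inter> KK) \<union> (\<lambda>k. s1 \<otimes> k) ` (S \<inter> KK)"
  proof
    show "S \<subseteq> (S \<inter> KK) \<union> (\<lambda>k. s1 \<otimes> k) ` (S \<inter> KK)"
    proof
      fix x assume x: "x \<in> S"
      show "x \<in> (S \<inter> KK) \<union> (\<lambda>k. s1 \<otimes> k) ` (S \<inter> KK)"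
      proof (cases "x \<in> KK")
        case True then show ?thesis using x by blast
      next
        case False
        have xG: "x \<in> carrier G" using x SG by blast
        have "inv s1 \<otimes> x \<in> KK" using KK_mult[OF inv_closed[OF s1G] xG] i1 False by simp
        moreover have "inv s1 \<otimes> x \<in> S" using subgroup.m_closed[OF S(1)] subgroup.m_inv_closed[OF S(1)] s1 x by blast
        moreover have "x = s1 \<otimes> (inv s1 \<otimes> x)" using s1G xG by (simp add: m_assoc[symmetric])
        ultimately show ?thesis by blast
      qed
    qed
    show "(S \<inter> KK) \<union> (\<lambda>k. s1 \<otimes> k) ` (S \<inter> KK) \<subseteq> S"
      using subgroup.m_closed[OF S(1)] s1 by auto
  qed
  have disj: "(S \<inter> KK) \<inter> (\<lambda>k. s1 \<otimes> k) ` (S \<inter> KK) = {}"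
  proof -
    have "s1 \<otimes> k \<notin> KK" if "k \<in> S \<inter> KK" for k
      using KK_mult[OF s1G, of k] that SG s1 by auto
    then show ?thesis by blast
  qed
  have inj: "inj_on (\<lambda>k. s1 \<otimes> k) (S \<inter> KK)" using s1G SG by (auto simp: inj_on_def subset_iff)
  have fin2: "finite (S \<inter> KK)" using S by simp
  have "card S = card (S \<inter> KK) + card ((\<lambda>k. s1 \<otimes> k) ` (S \<inter> KK))"
    using card_Un_disjoint[OF fin2 finite_imageI[OF fin2] disj] eq by simp
  then show "card S = 2 * card (S \<inter> KK)" using card_image[OF inj] by simp
qed

lemma card_KK: "card KK = 2^(n-1)"
proof -
  obtain y where y: "y \<in> carrier G" "y \<otimes> g0 \<noteq> g0 \<otimes> y" using g0nc by blast
  then have "y \<notin> KK" by (simp add: KK_def)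
  then have "card (carrier G) = 2 * card (carrier G \<inter> KK)" using index2(2)[OF subgroup_self fin y(1)] by simp
  moreover have "carrier G \<inter> KK = KK" using KK_G by blast
  ultimately have "2 * card KK = 2^n" using cardG by simp
  moreover have "(2::nat)^n = 2 * 2^(n-1)" using pow_split by simp
  ultimately show ?thesis by simp
qed

lemma CC_KK: "CC \<subseteq> KK"
proof -
  have g: "g0 \<in> KK" using g0G by (simp add: KK_def)
  have zK: "z \<in> KK" using zc g0G zG by (simp add: KK_def)
  have "g0 \<otimes> z \<in> KK" using KK_mult[OF g0G zG] g zK by simp
  then show ?thesis using g zK one_KK by (auto simp: CC_def)
qed

lemma er_KK: "elem_rel KK CC"
  using elem_rel_sub[OF er_CC KK_sub CC_KK KK_G] .

lemma finKK: "finite KK" using fin KK_G finite_subset by blast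

lemma card_Ys: "card (Subs (carrier G) CC k) = Ng (n-2) k"
proof -
  have "card (carrier G) = card CC * 2^(n-2)"
    using cardG card_CC pow_split by simp
  then show ?thesis using card_Subs[OF er_CC fin] by simp
qed


lemma card_YsK: "card (Subs KK CC k) = Ng (n-3) k"
proof -
  have "card KK = card CC * 2^(n-3)" using card_KK card_CC pow_split by simp
  then show ?thesis using card_Subs[OF er_KK finKK] by simp
qed

lemma card_A: "card {H. subgroup H G \<and> card H = 2^Suc j \<and> z \<in> H} = Ng (n-1) j"
proof -
  have "{H. subgroup H G \<and> card H = 2^Suc j \<and> z \<in> H} = Subs (carrier G) Z0 j"
    using card_Z0 subgroup.one_closed subgroup.subset by (fastforce simp: Subs_def Z0_def)
  moreover have "card (carrier G) = card Z0 * 2^(n-1)" using cardG card_Z0 pow_split by simp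
  ultimately show ?thesis using card_Subs[OF er_Z0 fin] by simp
qed

lemma BB_props:
  assumes H: "H \<in> BB k"
  shows "subgroup H G" "card H = 2^k" "z \<notin> H" "H \<subseteq> carrier G" "finite H"
    "\<And>h. h \<in> H \<Longrightarrow> h \<otimes> h = \<one>"
    "\<And>h h'. h \<in> H \<Longrightarrow> h' \<in> H \<Longrightarrow> h \<otimes> h' = h' \<otimes> h"
    "H \<inter> CC = {\<one>}"
proof -
  show Hs: "subgroup H G" "card H = 2^k" "z \<notin> H" using H by (auto simp: BB_def)
  show HG: "H \<subseteq> carrier G" using Hs subgroup.subset by blast
  show "finite H" using HG fin finite_subset by blast
  show sq1: "h \<otimes> h = \<one>" if h: "h \<in> H" for h
  proof -
    have "h \<otimes> h \<in> H" using subgroup.m_closed[OF Hs(1) h h] .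
    then show ?thesis using sq[of h] h HG Hs(3) by auto
  qed
  show "h \<otimes> h' = h' \<otimes> h" if h: "h \<in> H" "h' \<in> H" for h h'
  proof (rule ccontr)
    assume ne: "h \<otimes> h' \<noteq> h' \<otimes> h"
    have hG: "h \<in> carrier G" "h' \<in> carrier G" using h HG by auto
    have e: "h \<otimes> h' = h' \<otimes> h \<otimes> z" using cm[OF hG] ne by auto
    have "inv (h' \<otimes> h) \<otimes> (h \<otimes> h') \<in> H"
      using subgroup.m_closed[OF Hs(1)] subgroup.m_inv_closed[OF Hs(1)] h by blast
    moreover have "inv (h' \<otimes> h) \<otimes> (h \<otimes> h') = z"
    proof -
      have hh: "h' \<otimes> h \<in> carrier G" using hG by simp
      have "inv (h' \<otimes> h) \<otimes> (h' \<otimes> h \<otimes> z) = (inv (h' \<otimes> h) \<otimes> (h' \<otimes> h)) \<otimes> z"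
        using hh zG by (simp only: m_assoc inv_closed)
      also have "\<dots> = z" using hh zG by simp
      finally show ?thesis unfolding e .
    qed
    ultimately show False using Hs(3) by simp
  qed
  show "H \<inter> CC = {\<one>}"
  proof -
    have "g0 \<notin> H" using sq1 g0sq z1 by auto
    moreover have "g0 \<otimes> z \<notin> H"
    proof
      assume a: "g0 \<otimes> z \<in> H"
      have "(g0 \<otimes> z) \<otimes> (g0 \<otimes> z) = g0 \<otimes> (z \<otimes> g0) \<otimes> z" using g0G zG by (simp add: m_assoc)
      also have "\<dots> = g0 \<otimes> (g0 \<otimes> z) \<otimes> z" by (simp add: g0z)
      also have "\<dots> = (g0 \<otimes> g0) \<otimes> (z \<otimes> z)" using g0G zG by (simp add: m_assoc)
      also have "\<dots> = z" using zG by (simp add: g0sq zz)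
      finally have "(g0 \<otimes> z) \<otimes> (g0 \<otimes> z) = z" .
      then show False using sq1[OF a] z1 by simp
    qed
    moreover have "\<one> \<in> H" using subgroup.one_closed[OF Hs(1)] .
    ultimately show ?thesis using Hs(3) by (auto simp: CC_def)
  qed
qed

lemma BB_Y:
  assumes H: "H \<in> BB k"
  shows "prodset H CC \<in> Subs (carrier G) CC k" "H \<subseteq> prodset H CC"
proof -
  note P = BB_props[OF H]
  have sw: "\<exists>c'\<in>CC. c \<otimes> h = h \<otimes> c'" if c: "c \<in> CC" and h: "h \<in> H" for c h
  proof -
    have cG: "c \<in> carrier G" and hG: "h \<in> carrier G" using c h CC_G P(4) by auto
    have "c \<otimes> z \<in> CC" using subgroup.m_closed[OF CC_sub c] Z0_CC by (auto simp: Z0_def)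
    then show ?thesis using cm[OF cG hG] c cG hG zG by (auto simp: m_assoc)
  qed
  have sub: "subgroup (prodset H CC) G" using prodset_subgroup[OF P(1) CC_sub sw] .
  have "card (prodset H CC) = card H * card CC"
    using prodset_card[OF P(1) CC_sub P(5) _ P(8)] CC_G fin finite_subset by blast
  then have "card (prodset H CC) = card CC * 2^k" using P(2) by simp
  moreover have "CC \<subseteq> prodset H CC" "H \<subseteq> prodset H CC" using prodset_sup[OF P(1) CC_sub] by auto
  moreover have "prodset H CC \<subseteq> carrier G" using sub subgroup.subset by blast
  ultimately show "prodset H CC \<in> Subs (carrier G) CC k" "H \<subseteq> prodset H CC"
    using sub by (auto simp: Subs_def)
qed

definition "FF Y k = {H \<in> BB k. H \<subseteq> Y}"

lemma FF_finite: "finite Y \<Longrightarrow> finite (FF Y k)"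
  by (rule finite_subset[of _ "Pow Y"]) (auto simp: FF_def)

end


context cls begin

lemma fiber_K:
  assumes Y: "Y \<in> Subs KK CC j"
  shows "card (FF Y j) \<le> 2^j"
proof -
  have Ys: "subgroup Y G" "CC \<subseteq> Y" "Y \<subseteq> KK" "card Y = 4 * 2^j" using Y card_CC by (auto simp: Subs_def)
  have YG: "Y \<subseteq> carrier G" using Ys KK_G by blast
  have finY: "finite Y" using YG fin finite_subset by blast
  have g0Y: "g0 \<in> Y" using Ys(2) by (auto simp: CC_def)
  have zY: "z \<in> Y" using Ys(2) by (auto simp: CC_def)
  define I where "I = {x \<in> Y. x \<otimes> x = \<one>}"
  have finI: "finite I" using finY by (simp add: I_def)
  have cardI: "card I \<le> 2 * 2^j"
  proof -
    let ?J = "(\<lambda>x. x \<otimes> g0) ` I"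
    have JY: "?J \<subseteq> Y" using subgroup.m_closed[OF Ys(1)] g0Y by (auto simp: I_def)
    have disj: "I \<inter> ?J = {}"
    proof -
      have "(x \<otimes> g0) \<otimes> (x \<otimes> g0) = z" if x: "x \<in> I" for x
      proof -
        have xG: "x \<in> carrier G" using x YG by (auto simp: I_def)
        have xc: "x \<otimes> g0 = g0 \<otimes> x" using x Ys(3) by (auto simp: I_def KK_def)
        have "(x \<otimes> g0) \<otimes> (x \<otimes> g0) = x \<otimes> (g0 \<otimes> x) \<otimes> g0" using xG g0G by (simp add: m_assoc)
        also have "\<dots> = x \<otimes> (x \<otimes> g0) \<otimes> g0" using xc by simp
        also have "\<dots> = (x \<otimes> x) \<otimes> (g0 \<otimes> g0)" using xG g0G by (simp add: m_assoc)
        also have "\<dots> = z" using x zG by (simp add: I_def g0sq)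
        finally show ?thesis .
      qed
      then show ?thesis using z1 by (auto simp: I_def)
    qed
    have inj: "inj_on (\<lambda>x. x \<otimes> g0) I" using YG g0G by (auto simp: inj_on_def I_def subset_iff)
    have "card I + card ?J = card (I \<union> ?J)" using card_Un_disjoint[OF finI finite_imageI[OF finI] disj] by simp
    also have "\<dots> \<le> card Y" by (rule card_mono[OF finY]) (use JY in \<open>auto simp: I_def\<close>)
    finally have "2 * card I \<le> card Y" using card_image[OF inj] by simp
    then show ?thesis using Ys(4) by simp
  qed
  have Z0sw: "\<exists>c'\<in>Z0. c \<otimes> h = h \<otimes> c'" if "c \<in> Z0" "h \<in> carrier G" for c h
    using that zc by (auto simp: Z0_def)
  have W_eq: "prodset H Z0 = I" if H: "H \<in> FF Y j" for H
  proof -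
    have HB: "H \<in> BB j" and HY: "H \<subseteq> Y" using H by (auto simp: FF_def)
    note P = BB_props[OF HB]
    have int: "H \<inter> Z0 = {\<one>}" using P(3) subgroup.one_closed[OF P(1)] by (auto simp: Z0_def)
    have cW: "card (prodset H Z0) = 2 * 2^j"
      using prodset_card[OF P(1) Z0_sub P(5) _ int] card_Z0 P(2) by (simp add: Z0_def)
    have WI: "prodset H Z0 \<subseteq> I"
    proof
      fix w assume "w \<in> prodset H Z0"
      then obtain h c where hc: "h \<in> H" "c \<in> Z0" "w = h \<otimes> c" by (auto simp: prodset_def)
      have hG: "h \<in> carrier G" and cG: "c \<in> carrier G" using hc P(4) zG by (auto simp: Z0_def)
      have cc: "c \<otimes> c = \<one>" "c \<otimes> h = h \<otimes> c" using hc zz zc[OF hG] hG by (auto simp: Z0_def)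
      have "w \<otimes> w = h \<otimes> (c \<otimes> h) \<otimes> c" using hc hG cG by (simp add: m_assoc)
      also have "\<dots> = (h \<otimes> h) \<otimes> (c \<otimes> c)" using cc hG cG by (simp add: m_assoc)
      also have "\<dots> = \<one>" using cc P(6)[OF hc(1)] by simp
      finally have "w \<otimes> w = \<one>" .
      moreover have "w \<in> Y" using hc HY Ys(2) Z0_CC subgroup.m_closed[OF Ys(1)] by blast
      ultimately show "w \<in> I" by (simp add: I_def)
    qed
    show ?thesis using card_subset_eq[OF finI WI] cW cardI card_mono[OF finI WI] by linarith
  qed
  show ?thesis
  proof (cases "FF Y j = {}")
    case True then show ?thesis by simp
  next
    case False
    then obtain H0 where H0: "H0 \<in> FF Y j" by blast
    have H0B: "H0 \<in> BB j" using H0 by (auto simp: FF_def)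
    note P0 = BB_props[OF H0B]
    have Isub: "subgroup I G" using W_eq[OF H0] prodset_subgroup[OF P0(1) Z0_sub Z0sw] P0(4) by blast
    have Z0I: "Z0 \<subseteq> I" using W_eq[OF H0] prodset_sup[OF P0(1) Z0_sub] by blast
    have IG: "I \<subseteq> carrier G" using Isub subgroup.subset by blast
    have erI: "elem_rel I Z0" using elem_rel_sub[OF er_Z0 Isub Z0I IG] .
    have int0: "H0 \<inter> Z0 = {\<one>}" using P0(3) subgroup.one_closed[OF P0(1)] by (auto simp: Z0_def)
    have cI: "card I = card Z0 * 2^j"
      using W_eq[OF H0] prodset_card[OF P0(1) Z0_sub P0(5) _ int0] card_Z0 P0(2) by (simp add: Z0_def)
    obtain ws where ws: "indep I Z0 ws" "length ws = j" "sp Z0 ws = I"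
      using basis_exists[OF erI finI cI] by blast
    have wsI: "set ws \<subseteq> I" using indep_set[OF ws(1)] .
    define g where "g H = map (\<lambda>w. SOME h. h \<in> H \<and> (h = w \<or> h = w \<otimes> z)) ws" for H
    have gprop: "g H ! i \<in> H \<and> (g H ! i = ws ! i \<or> g H ! i = ws ! i \<otimes> z)"
      if H: "H \<in> FF Y j" and i: "i < length ws" for H i
    proof -
      have HB: "H \<in> BB j" using H by (auto simp: FF_def)
      note P = BB_props[OF HB]
      have "ws ! i \<in> prodset H Z0" using W_eq[OF H] wsI i by auto
      then obtain h c where hc: "h \<in> H" "c \<in> Z0" "ws ! i = h \<otimes> c" by (auto simp: prodset_def)
      have hG: "h \<in> carrier G" using hc P(4) by auto
      have "h = ws ! i \<or> h = ws ! i \<otimes> z"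
        using hc hG zG zz by (auto simp: Z0_def m_assoc)
      then have "\<exists>h. h \<in> H \<and> (h = ws ! i \<or> h = ws ! i \<otimes> z)" using hc by blast
      then have "(SOME h. h \<in> H \<and> (h = ws ! i \<or> h = ws ! i \<otimes> z)) \<in> H \<and>
         ((SOME h. h \<in> H \<and> (h = ws ! i \<or> h = ws ! i \<otimes> z)) = ws ! i \<or>
          (SOME h. h \<in> H \<and> (h = ws ! i \<or> h = ws ! i \<otimes> z)) = ws ! i \<otimes> z)"
        by (rule someI_ex)
      then show ?thesis unfolding g_def using i by simp
    qed
    have sp_g: "sp {\<one>} (g H) = H" if H: "H \<in> FF Y j" for H
    proof -
      have HB: "H \<in> BB j" using H by (auto simp: FF_def)
      note P = BB_props[OF HB]
      have erH: "elem_rel H {\<one>}"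
        unfolding elem_rel_def
      proof (intro conjI ballI)
        show "subgroup H G" "subgroup {\<one>} G" "{\<one>} \<subseteq> H" using P(1) triv_subgroup subgroup.one_closed[OF P(1)] by auto
        show "x \<otimes> x \<in> {\<one>}" if "x \<in> H" for x using P(6)[OF that] by simp
        show "\<exists>c\<in>{\<one>}. x \<otimes> y = y \<otimes> x \<otimes> c" if "x \<in> H" "y \<in> H" for x y
          using P(7)[OF that] that P(4) by (auto simp: subset_iff)
      qed
      have len: "length (g H) = length ws" by (simp add: g_def)
      have cond: "\<forall>i<length ws. g H ! i \<in> H \<and> (\<exists>c\<in>Z0. g H ! i = ws ! i \<otimes> c)"
      proof (intro allI impI)
        fix i assume i: "i < length ws"
        have wG: "ws ! i \<in> carrier G" using wsI i IG nth_mem by blast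
        show "g H ! i \<in> H \<and> (\<exists>c\<in>Z0. g H ! i = ws ! i \<otimes> c)"
          using gprop[OF H i] wG by (auto simp: Z0_def)
      qed
      have ind: "indep H {\<one>} (g H)"
        using indep_transfer[OF erI finI _ ws(1) len cond] subgroup.one_closed[OF Z0_sub] by blast
      note spp = sp_props[OF erH P(5) ind]
      have "sp {\<one>} (g H) \<subseteq> H" using spp by blast
      moreover have "card (sp {\<one>} (g H)) = card H" using spp P(2) len ws(2) by simp
      ultimately show ?thesis using card_subset_eq[OF P(5)] by blast
    qed
    have inj: "inj_on g (FF Y j)"
    proof (rule inj_onI)
      fix H H' assume "H \<in> FF Y j" "H' \<in> FF Y j" "g H = g H'"
      then show "H = H'" using sp_g by metis
    qed
    let ?L = "{hs. length hs = length ws \<and> (\<forall>i<length ws. hs!i \<in> (\<lambda>w. {w, w \<otimes> z}) (ws!i))}"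
    have Lb: "finite ?L \<and> card ?L \<le> 2 ^ length ws"
      by (rule card_choice_lists) (auto simp: card_insert_le_m1)
    have gL: "g ` FF Y j \<subseteq> ?L"
    proof
      fix hs assume "hs \<in> g ` FF Y j"
      then obtain H where H: "H \<in> FF Y j" "hs = g H" by blast
      show "hs \<in> ?L" using gprop[OF H(1)] H(2) by (auto simp: g_def)
    qed
    have "card (FF Y j) = card (g ` FF Y j)" using card_image[OF inj] by simp
    also have "\<dots> \<le> card ?L" using card_mono[OF _ gL] Lb by blast
    also have "\<dots> \<le> 2^j" using Lb ws(2) by simp
    finally show ?thesis .
  qed
qed


lemma fiber_N:
  assumes Y: "Y \<in> Subs (carrier G) CC k" and nK: "\<not> Y \<subseteq> KK"
  shows "card (FF Y k) \<le> 2^Suc k"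
proof -
  have Ys: "subgroup Y G" "CC \<subseteq> Y" "Y \<subseteq> carrier G" "card Y = 4 * 2^k" using Y card_CC by (auto simp: Subs_def)
  have finY: "finite Y" using Ys fin finite_subset by blast
  obtain y1 where y1: "y1 \<in> Y" "y1 \<notin> KK" using nK by blast
  have y1G: "y1 \<in> carrier G" using y1 Ys by blast
  obtain j where kj: "k = Suc j"
  proof (cases k)
    case 0
    then have "card Y = card CC" using Ys card_CC by simp
    then have "Y = CC" using card_subset_eq[OF finY Ys(2)] by simp
    then show ?thesis using CC_KK nK by simp
  next
    case (Suc j) then show ?thesis using that by simp
  qed
  have YK: "Y \<inter> KK \<in> Subs KK CC j"
  proof -
    have "card Y = 2 * card (Y \<inter> KK)" using index2(2)[OF Ys(1) finY y1] .
    then have "card (Y \<inter> KK) = card CC * 2^j" using Ys(4) card_CC kj by simp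
    moreover have "subgroup (Y \<inter> KK) G" using subgroups_Inter_pair[OF Ys(1) KK_sub] .
    ultimately show ?thesis using Ys(2) CC_KK by (auto simp: Subs_def)
  qed
  define cs where "cs = (\<lambda>c. y1 \<otimes> c) ` CC"
  have cs_nK: "x \<notin> KK" if xc: "x \<in> cs" for x
  proof -
    obtain c where c: "c \<in> CC" "x = y1 \<otimes> c" using xc by (auto simp: cs_def)
    have "c \<in> KK" "c \<in> carrier G" using c CC_KK CC_G by auto
    then show ?thesis using KK_mult[OF y1G, of c] c y1 by simp
  qed
  have ex: "\<exists>h. h \<in> H \<and> h \<in> cs" if H: "H \<in> FF Y k" for H
  proof -
    have HB: "H \<in> BB k" and HY: "H \<subseteq> Y" using H by (auto simp: FF_def)
    note P = BB_props[OF HB]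
    have "card (prodset H CC) = card H * card CC"
      using prodset_card[OF P(1) CC_sub P(5) _ P(8)] CC_G fin finite_subset by blast
    then have c1: "card (prodset H CC) = card Y" using P(2) Ys(4) card_CC by simp
    have sub: "prodset H CC \<subseteq> Y" using prodset_in[OF Ys(1) HY Ys(2)] .
    have "prodset H CC = Y" using card_subset_eq[OF finY sub c1] .
    then obtain h c where hc: "h \<in> H" "c \<in> CC" "y1 = h \<otimes> c" using y1 by (auto simp: prodset_def)
    have hG: "h \<in> carrier G" and cG: "c \<in> carrier G" using hc P(4) CC_G by auto
    have "h = y1 \<otimes> inv c" using hc hG cG by (simp add: m_assoc)
    moreover have "inv c \<in> CC" using subgroup.m_inv_closed[OF CC_sub hc(2)] .
    ultimately have "h \<in> cs" by (auto simp: cs_def)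
    then show ?thesis using hc by blast
  qed
  define phi where "phi H = (H \<inter> KK, SOME h. h \<in> H \<and> h \<in> cs)" for H
  have phi2: "snd (phi H) \<in> H \<and> snd (phi H) \<in> cs" if H: "H \<in> FF Y k" for H
    unfolding phi_def snd_conv by (rule someI_ex[OF ex[OF H]])
  have decomp: "H = fst (phi H) \<union> (\<lambda>x. snd (phi H) \<otimes> x) ` fst (phi H)" if H: "H \<in> FF Y k" for H
  proof -
    have HB: "H \<in> BB k" using H by (auto simp: FF_def)
    note P = BB_props[OF HB]
    have "snd (phi H) \<notin> KK" using cs_nK phi2[OF H] by blast
    then show ?thesis using index2(1)[OF P(1) P(5)] phi2[OF H] by (simp add: phi_def)
  qed
  have inj: "inj_on phi (FF Y k)"
  proof (rule inj_onI)
    fix H H' assume "H \<in> FF Y k" "H' \<in> FF Y k" "phi H = phi H'"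
    then show "H = H'" using decomp by metis
  qed
  have img: "phi ` FF Y k \<subseteq> FF (Y \<inter> KK) j \<times> cs"
  proof
    fix p assume "p \<in> phi ` FF Y k"
    then obtain H where H: "H \<in> FF Y k" "p = phi H" by blast
    have HB: "H \<in> BB k" and HY: "H \<subseteq> Y" using H by (auto simp: FF_def)
    note P = BB_props[OF HB]
    have nk: "snd (phi H) \<notin> KK" using cs_nK phi2[OF H(1)] by blast
    have "card H = 2 * card (H \<inter> KK)" using index2(2)[OF P(1) P(5)] phi2[OF H(1)] nk by blast
    then have "card (H \<inter> KK) = 2^j" using P(2) kj by simp
    moreover have "subgroup (H \<inter> KK) G" using subgroups_Inter_pair[OF P(1) KK_sub] .
    ultimately have "H \<inter> KK \<in> FF (Y \<inter> KK) j" using P(3) HY by (auto simp: FF_def BB_def)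
    then show "p \<in> FF (Y \<inter> KK) j \<times> cs" using H(2) phi2[OF H(1)] by (simp add: phi_def)
  qed
  have finF: "finite (FF (Y \<inter> KK) j)" using FF_finite finY by simp
  have fincs: "finite cs" unfolding cs_def using CC_G fin finite_subset finite_imageI by blast
  have "card (FF Y k) = card (phi ` FF Y k)" using card_image[OF inj] by simp
  also have "\<dots> \<le> card (FF (Y \<inter> KK) j \<times> cs)" using card_mono[OF _ img] finF fincs by simp
  also have "\<dots> = card (FF (Y \<inter> KK) j) * card cs" by (simp add: card_cartesian_product)
  also have "\<dots> \<le> 2^j * 4"
  proof (rule mult_le_mono)
    show "card (FF (Y \<inter> KK) j) \<le> 2^j" using fiber_K[OF YK] .
    have finCC: "finite CC" using CC_G fin finite_subset by blast
    show "card cs \<le> 4" unfolding cs_def using card_image_le[OF finCC, of "\<lambda>c. y1 \<otimes> c"] card_CC by simp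
  qed
  also have "\<dots> = 2^Suc k" using kj by simp
  finally show ?thesis .
qed

lemma B_bound: "card (BB k) + 2^k * Ng (n-3) k \<le> 2^Suc k * Ng (n-2) k"
proof -
  let ?Ys = "Subs (carrier G) CC k" and ?YK = "Subs KK CC k"
  have finYs: "finite ?Ys" by (rule finite_subset[of _ "Pow (carrier G)"]) (auto simp: Subs_def fin)
  have YKs: "?YK \<subseteq> ?Ys" using KK_G by (auto simp: Subs_def)
  have finF: "\<forall>Y\<in>?Ys. finite (FF Y k)" using FF_finite fin finite_subset by (auto simp: Subs_def)
  have "BB k \<subseteq> (\<Union>Y\<in>?Ys. FF Y k)"
  proof
    fix H assume H: "H \<in> BB k"
    then have "H \<in> FF (prodset H CC) k" using BB_Y[OF H] by (auto simp: FF_def)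
    then show "H \<in> (\<Union>Y\<in>?Ys. FF Y k)" using BB_Y[OF H] by blast
  qed
  moreover have "finite (\<Union>Y\<in>?Ys. FF Y k)" using finYs finF by blast
  ultimately have "card (BB k) \<le> card (\<Union>Y\<in>?Ys. FF Y k)"
    using card_mono by blast
  also have "\<dots> \<le> (\<Sum>Y\<in>?Ys. card (FF Y k))" by (rule card_UN_le[OF finYs])
  also have "\<dots> = (\<Sum>Y\<in>?Ys - ?YK. card (FF Y k)) + (\<Sum>Y\<in>?YK. card (FF Y k))"
    by (rule sum.subset_diff[OF YKs finYs])
  also have "\<dots> \<le> (\<Sum>Y\<in>?Ys - ?YK. 2^Suc k) + (\<Sum>Y\<in>?YK. 2^k)"
  proof (rule add_mono)
    show "(\<Sum>Y\<in>?Ys - ?YK. card (FF Y k)) \<le> (\<Sum>Y\<in>?Ys - ?YK. 2^Suc k)"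
    proof (rule sum_mono)
      fix Y assume Y: "Y \<in> ?Ys - ?YK"
      then have "\<not> Y \<subseteq> KK" by (auto simp: Subs_def)
      then show "card (FF Y k) \<le> 2^Suc k" using fiber_N Y by blast
    qed
    show "(\<Sum>Y\<in>?YK. card (FF Y k)) \<le> (\<Sum>Y\<in>?YK. 2^k)"
      by (rule sum_mono) (rule fiber_K)
  qed
  also have "\<dots> = card (?Ys - ?YK) * 2^Suc k + card ?YK * 2^k" by simp
  also have "\<dots> = (card ?Ys - card ?YK) * 2^Suc k + card ?YK * 2^k"
    using card_Diff_subset[OF finite_subset[OF YKs finYs] YKs] by simp
  finally have "card (BB k) \<le> (card ?Ys - card ?YK) * 2^Suc k + card ?YK * 2^k" .
  moreover have "card ?YK \<le> card ?Ys" using card_mono[OF finYs YKs] .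
  moreover have "(card ?Ys - card ?YK) * 2^Suc k + card ?YK * 2^Suc k = card ?Ys * 2^Suc k"
    using \<open>card ?YK \<le> card ?Ys\<close> by (simp add: add_mult_distrib[symmetric])
  moreover have "card ?YK * 2^Suc k = card ?YK * 2^k + card ?YK * 2^k" by simp
  ultimately have "card (BB k) + card ?YK * 2^k \<le> card ?Ys * 2^Suc k"
    by linarith
  then show ?thesis using card_Ys card_YsK by (simp add: mult.commute)
qed


lemma s_split: "num_subgroups_of_order G (2^Suc j) = Ng (n-1) j + card (BB (Suc j))"
proof -
  let ?S = "{H. subgroup H G \<and> card H = 2^Suc j}"
  let ?A = "{H. subgroup H G \<and> card H = 2^Suc j \<and> z \<in> H}"
  have eq: "?S = ?A \<union> BB (Suc j)" by (auto simp: BB_def)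
  have fS: "finite ?S" by (rule finite_subset[of _ "Pow (carrier G)"]) (auto dest: subgroup.subset simp: fin)
  have fA: "finite ?A" using fS by (rule finite_subset[rotated]) auto
  have fB: "finite (BB (Suc j))" using fS by (rule finite_subset[rotated]) (auto simp: BB_def)
  have "card ?S = card ?A + card (BB (Suc j))"
    unfolding eq by (rule card_Un_disjoint[OF fA fB]) (auto simp: BB_def)
  then show ?thesis using card_A unfolding num_subgroups_of_order_def by simp
qed

lemma G_bound:
  "num_subgroups_of_order G (2^Suc j) + 2^Suc j * Ng (n-3) (Suc j) \<le> Ng (n-1) j + 2^Suc (Suc j) * Ng (n-2) (Suc j)"
  using s_split[of j] B_bound[of "Suc j"] by simp

end

lemma (in group) s0: "num_subgroups_of_order G 1 = 1"
proof -
  have "{H. subgroup H G \<and> card H = 1} = {{\<one>}}"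
  proof
    show "{H. subgroup H G \<and> card H = 1} \<subseteq> {{\<one>}}"
    proof
      fix H assume H: "H \<in> {H. subgroup H G \<and> card H = 1}"
      then obtain a where "H = {a}" by (auto simp: card_1_singleton_iff)
      moreover have "\<one> \<in> H" using H subgroup.one_closed by blast
      ultimately show "H \<in> {{\<one>}}" by simp
    qed
    show "{{\<one>}} \<subseteq> {H. subgroup H G \<and> card H = 1}" using triv_subgroup by auto
  qed
  then show ?thesis unfolding num_subgroups_of_order_def by simp
qed



context group begin

lemma comm_eq: "a \<in> carrier G \<Longrightarrow> b \<in> carrier G \<Longrightarrow> a \<otimes> b = (a \<otimes> b \<otimes> inv a \<otimes> inv b) \<otimes> (b \<otimes> a)"
proof -
  assume ab: "a \<in> carrier G" "b \<in> carrier G"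
  have h: "inv b \<otimes> (b \<otimes> a) = a" using ab by (simp add: m_assoc[symmetric])
  show ?thesis using ab by (simp add: m_assoc h)
qed

lemma odd_pow_in:
  assumes fin: "finite (carrier G)" and cG: "card (carrier G) = 2^n"
    and x: "x \<in> carrier G" and M: "subgroup M G" and xa: "x [^] (a::nat) \<in> M" and odd: "odd a"
  shows "x \<in> M"
proof -
  have a0: "a \<noteq> 0"
  proof
    assume "a = 0" then show False using odd by simp
  qed
  have g: "gcd a (2^n) = 1" using odd by simp
  obtain u v where uv: "a * u = 2^n * v + 1" using bezout_nat[OF a0, of "2^n"] g by auto
  have o: "x [^] (2^n::nat) = \<one>" using pow_order_eq_1[OF x] cG by (simp add: order_def)
  have "x [^] (a * u) = x [^] (2^n * v + 1)" using uv by simp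
  also have "\<dots> = (x [^] (2^n::nat)) [^] v \<otimes> x [^] (1::nat)" using x by (simp add: nat_pow_mult[symmetric] nat_pow_pow)
  also have "\<dots> = x" using o x by simp
  finally have e: "x [^] (a * u) = x" .
  have "(x [^] a) [^] u \<in> M"
  proof (induction u)
    case 0 then show ?case using subgroup.one_closed[OF M] by simp
  next
    case (Suc u)
    then show ?case using subgroup.m_closed[OF M Suc xa] by simp
  qed
  then show ?thesis using e x by (simp add: nat_pow_pow)
qed

lemma sq_in_max:
  assumes fin: "finite (carrier G)" and cG: "card (carrier G) = 2^n"
    and Mmax: "maximal_subgroup G M"
    and conj: "\<And>g m. g \<in> carrier G \<Longrightarrow> m \<in> M \<Longrightarrow> \<exists>m'\<in>M. g \<otimes> m = m' \<otimes> g"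
    and x: "x \<in> carrier G"
  shows "x \<otimes> x \<in> M"
proof (rule ccontr)
  assume ny: "x \<otimes> x \<notin> M"
  define y where "y = x \<otimes> x"
  have yG: "y \<in> carrier G" using x by (simp add: y_def)
  have M: "subgroup M G" "M \<noteq> carrier G"
    and mx: "\<And>K. subgroup K G \<Longrightarrow> M \<subseteq> K \<Longrightarrow> K \<noteq> carrier G \<Longrightarrow> K = M"
    using Mmax unfolding maximal_subgroup_def by auto
  have MG: "M \<subseteq> carrier G" using M subgroup.subset by blast
  have o: "y [^] (2^n::nat) = \<one>" using pow_order_eq_1[OF yG] cG by (simp add: order_def)
  define T where "T = {m \<otimes> y [^] (i::nat) |m i. m \<in> M}"
  have TG: "T \<subseteq> carrier G" using MG yG by (auto simp: T_def)
  have conj': "\<exists>m'\<in>M. y [^] (i::nat) \<otimes> m = m' \<otimes> y [^] i" if "m \<in> M" for m i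
    using conj[of "y [^] i" m] that yG by simp
  have invp: "inv (y [^] (i::nat)) = y [^] (i * (2^n - 1))" for i
  proof -
    obtain p where p: "(2::nat)^n = Suc p" using not0_implies_Suc[of "(2::nat)^n"] by auto
    have e: "i * (2^n - 1) + i = i * 2^n" unfolding p by simp
    have "y [^] (i * (2^n - 1)) \<otimes> y [^] i = y [^] (i * (2^n - 1) + i)"
      by (simp add: nat_pow_mult yG)
    also have "\<dots> = y [^] (i * 2^n)" unfolding e ..
    also have "\<dots> = (y [^] (2^n::nat)) [^] i" using yG by (simp add: nat_pow_pow mult.commute)
    also have "\<dots> = \<one>" using o by simp
    finally show ?thesis using yG by (simp add: inv_equality)
  qed
  have Tsub: "subgroup T G"
  proof (rule subgroupI)
    show "T \<subseteq> carrier G" by (rule TG)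
    have "\<one> \<otimes> y [^] (0::nat) \<in> T" unfolding T_def using subgroup.one_closed[OF M(1)] by blast
    then show "T \<noteq> {}" by blast
  next
    fix a assume "a \<in> T"
    then obtain m i where mi: "m \<in> M" "a = m \<otimes> y [^] (i::nat)" by (auto simp: T_def)
    have mG: "m \<in> carrier G" using mi MG by auto
    obtain m' where m': "m' \<in> M" "y [^] (i * (2^n - 1)) \<otimes> inv m = m' \<otimes> y [^] (i * (2^n - 1))"
      using conj' subgroup.m_inv_closed[OF M(1) mi(1)] by blast
    have "inv a = inv (y [^] i) \<otimes> inv m" using mi mG yG by (simp add: inv_mult_group)
    also have "\<dots> = m' \<otimes> y [^] (i * (2^n - 1))" using invp m' by simp
    finally show "inv a \<in> T" unfolding T_def using m'(1) by blast
  next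
    fix a b assume "a \<in> T" "b \<in> T"
    then obtain m i m2 j where mi: "m \<in> M" "a = m \<otimes> y [^] (i::nat)" "m2 \<in> M" "b = m2 \<otimes> y [^] (j::nat)"
      by (auto simp: T_def)
    have mG: "m \<in> carrier G" "m2 \<in> carrier G" using mi MG by auto
    obtain m' where m': "m' \<in> M" "y [^] i \<otimes> m2 = m' \<otimes> y [^] i" using conj' mi(3) by blast
    have m'G: "m' \<in> carrier G" using m' MG by auto
    have "a \<otimes> b = m \<otimes> (y [^] i \<otimes> m2) \<otimes> y [^] j" using mi mG yG by (simp add: m_assoc)
    also have "\<dots> = (m \<otimes> m') \<otimes> (y [^] i \<otimes> y [^] j)" using m' mG m'G yG by (simp add: m_assoc)
    also have "\<dots> = (m \<otimes> m') \<otimes> y [^] (i + j)" using yG by (simp add: nat_pow_mult)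
    finally show "a \<otimes> b \<in> T" unfolding T_def using subgroup.m_closed[OF M(1) mi(1) m'(1)] by blast
  qed
  have MT: "M \<subseteq> T"
  proof
    fix m assume "m \<in> M"
    then have "m = m \<otimes> y [^] (0::nat)" using MG by auto
    then show "m \<in> T" unfolding T_def using \<open>m \<in> M\<close> by blast
  qed
  have yT: "y \<in> T"
  proof -
    have "y = \<one> \<otimes> y [^] (1::nat)" using yG by simp
    then show ?thesis unfolding T_def using subgroup.one_closed[OF M(1)] by blast
  qed
  have Tfull: "T = carrier G"
  proof (rule ccontr)
    assume "T \<noteq> carrier G"
    then have "T = M" using mx[OF Tsub MT] by simp
    then show False using yT ny by (simp add: y_def)
  qed
  then have "x \<in> T" using x by simp
  then obtain m i where mi: "m \<in> M" "x = m \<otimes> y [^] (i::nat)" unfolding T_def by blast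
  have mG: "m \<in> carrier G" using mi MG by auto
  have "m = x \<otimes> inv (y [^] i)" using mi mG yG by (simp add: m_assoc)
  also have "\<dots> = x \<otimes> y [^] (i * (2^n - 1))" using invp by simp
  also have "y = x [^] (2::nat)" using x by (simp add: y_def numeral_2_eq_2)
  also have "x \<otimes> (x [^] (2::nat)) [^] (i * (2^n - 1)) = x \<otimes> x [^] (2 * (i * (2^n - 1)))"
    using x by (simp add: nat_pow_pow)
  also have "\<dots> = x [^] (1 + 2 * (i * (2^n - 1)))"
    using nat_pow_mult[OF x, of 1 "2 * (i * (2^n - 1))"] x by simp
  finally have "x [^] (1 + 2 * (i * (2^n - 1))) \<in> M" using mi by simp
  from odd_pow_in[OF fin cG x M(1) this] have "x \<in> M" by simp
  then show False using ny subgroup.m_closed[OF M(1)] by blast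
qed


lemma derive_cls:
  assumes fin: "finite (carrier G)" and cG: "card (carrier G) = 2^n" and n3: "n \<ge> 3"
    and D2: "card (commutator_subgroup G) = 2" and DF: "commutator_subgroup G = frattini G"
  shows "\<exists>z g0. cls G z g0 n"
proof -
  define D where "D = commutator_subgroup G"
  have Dsub: "subgroup D G" unfolding D_def commutator_subgroup_def
    by (rule derived_is_subgroup) simp
  have DG: "D \<subseteq> carrier G" using Dsub subgroup.subset by blast
  have finD: "finite D" using DG fin finite_subset by blast
  have one: "\<one> \<in> D" using subgroup.one_closed[OF Dsub] .
  obtain a b where ab: "D = {a, b}" "a \<noteq> b" using D2 card_2_iff unfolding D_def by metis
  obtain z where zD: "z \<in> D" "z \<noteq> \<one>" using ab by blast
  have Dz: "D = {\<one>, z}"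
  proof -
    have "{\<one>, z} \<subseteq> D" using one zD by blast
    moreover have "card {\<one>, z} = card D" using zD D2 by (simp add: D_def)
    ultimately show ?thesis using card_subset_eq[OF finD] by metis
  qed
  have zG: "z \<in> carrier G" using zD DG by blast
  have comm_in: "x \<otimes> y \<otimes> inv x \<otimes> inv y \<in> D" if "x \<in> carrier G" "y \<in> carrier G" for x y
    unfolding D_def commutator_subgroup_def derived_def by (rule generate.incl) (use that in blast)
  have zz: "z \<otimes> z = \<one>"
  proof -
    have "z \<otimes> z \<in> D" using subgroup.m_closed[OF Dsub zD(1) zD(1)] .
    moreover have "z \<otimes> z \<noteq> z" using zG zD(2) by simp
    ultimately show ?thesis using Dz by blast
  qed
  have zc: "z \<otimes> x = x \<otimes> z" if x: "x \<in> carrier G" for x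
  proof -
    have c: "x \<otimes> z \<otimes> inv x \<otimes> inv z \<in> {\<one>, z}" using comm_in[OF x zG] Dz by simp
    have e: "x \<otimes> z = (x \<otimes> z \<otimes> inv x \<otimes> inv z) \<otimes> (z \<otimes> x)" using comm_eq[OF x zG] .
    show ?thesis
    proof (cases "x \<otimes> z \<otimes> inv x \<otimes> inv z = z")
      case True
      then have "x \<otimes> z = z \<otimes> (z \<otimes> x)" using e by simp
      also have "\<dots> = x" using zz zG x by (simp add: m_assoc[symmetric])
      finally show ?thesis using zD(2) x zG by simp
    next
      case False
      then have "x \<otimes> z \<otimes> inv x \<otimes> inv z = \<one>" using c by simp
      then show ?thesis using e x zG by simp
    qed
  qed
  have cm: "x \<otimes> y = y \<otimes> x \<or> x \<otimes> y = y \<otimes> x \<otimes> z" if xy: "x \<in> carrier G" "y \<in> carrier G" for x y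
  proof -
    have c: "x \<otimes> y \<otimes> inv x \<otimes> inv y \<in> {\<one>, z}" using comm_in[OF xy] Dz by simp
    have e: "x \<otimes> y = (x \<otimes> y \<otimes> inv x \<otimes> inv y) \<otimes> (y \<otimes> x)" using comm_eq[OF xy] .
    show ?thesis
    proof (cases "x \<otimes> y \<otimes> inv x \<otimes> inv y = z")
      case True
      then have "x \<otimes> y = z \<otimes> (y \<otimes> x)" using e by simp
      then show ?thesis using zc[of "y \<otimes> x"] xy by simp
    next
      case False
      then show ?thesis using c e xy by simp
    qed
  qed
  have sq: "x \<otimes> x = \<one> \<or> x \<otimes> x = z" if x: "x \<in> carrier G" for x
  proof -
    have "x \<otimes> x \<in> M" if M: "maximal_subgroup G M" for M
    proof -
      have Msub: "subgroup M G" using M by (simp add: maximal_subgroup_def)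
      have zM: "z \<in> M" using zD DF M unfolding D_def frattini_def by blast
      have conj: "\<exists>m'\<in>M. g \<otimes> m = m' \<otimes> g" if g: "g \<in> carrier G" and m: "m \<in> M" for g m
      proof -
        have mG: "m \<in> carrier G" using m Msub subgroup.subset by blast
        show ?thesis
        proof (cases "g \<otimes> m = m \<otimes> g")
          case True then show ?thesis using m by blast
        next
          case False
          then have "g \<otimes> m = m \<otimes> g \<otimes> z" using cm[OF g mG] by simp
          also have "\<dots> = (m \<otimes> z) \<otimes> g" using mG g zG zc[OF g] by (simp add: m_assoc)
          finally show ?thesis using subgroup.m_closed[OF Msub m zM] by blast
        qed
      qed
      show ?thesis using sq_in_max[OF fin cG M conj x] .
    qed
    then have "x \<otimes> x \<in> frattini G" unfolding frattini_def using x by blast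
    then show ?thesis using Dz DF by (auto simp: D_def)
  qed
  have nab: "\<exists>x\<in>carrier G. \<exists>y\<in>carrier G. x \<otimes> y \<noteq> y \<otimes> x"
  proof (rule ccontr)
    assume "\<not> ?thesis"
    then have ab: "x \<otimes> y = y \<otimes> x" if "x \<in> carrier G" "y \<in> carrier G" for x y using that by blast
    have "derived_set G (carrier G) \<subseteq> {\<one>}"
    proof
      fix c assume "c \<in> derived_set G (carrier G)"
      then obtain x y where xy: "x \<in> carrier G" "y \<in> carrier G" "c = x \<otimes> y \<otimes> inv x \<otimes> inv y" by blast
      have "c = y \<otimes> x \<otimes> inv x \<otimes> inv y" using xy ab by simp
      also have "\<dots> = \<one>" using xy by (simp add: m_assoc)
      finally show "c \<in> {\<one>}" by simp
    qed
    then have "D \<subseteq> {\<one>}" unfolding D_def commutator_subgroup_def derived_def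
      using generate_subgroup_incl[OF _ triv_subgroup] by blast
    then show False using zD by blast
  qed
  then obtain x y where xy: "x \<in> carrier G" "y \<in> carrier G" "x \<otimes> y \<noteq> y \<otimes> x" by blast
  have xyz: "x \<otimes> y = y \<otimes> x \<otimes> z" using cm[OF xy(1,2)] xy(3) by simp
  have yxz: "y \<otimes> x = x \<otimes> y \<otimes> z"
  proof -
    have "x \<otimes> y \<otimes> z = y \<otimes> x \<otimes> (z \<otimes> z)" using xyz xy zG by (simp add: m_assoc)
    then show ?thesis using zz xy by simp
  qed
  obtain g0 where g0: "g0 \<in> carrier G" "g0 \<otimes> g0 = z" "\<exists>w\<in>carrier G. w \<otimes> g0 \<noteq> g0 \<otimes> w"
  proof (cases "x \<otimes> x = z")
    case True then show ?thesis using that[of x] xy by metis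
  next
    case F1: False
    show ?thesis
    proof (cases "y \<otimes> y = z")
      case True then show ?thesis using that[of y] xy by metis
    next
      case F2: False
      have xx: "x \<otimes> x = \<one>" and yy: "y \<otimes> y = \<one>" using sq xy F1 F2 by auto
      have "(x \<otimes> y) \<otimes> (x \<otimes> y) = x \<otimes> (y \<otimes> x) \<otimes> y" using xy by (simp add: m_assoc)
      also have "\<dots> = x \<otimes> (x \<otimes> y \<otimes> z) \<otimes> y" using yxz by simp
      also have "\<dots> = (x \<otimes> x) \<otimes> (y \<otimes> (z \<otimes> y))" using xy zG by (simp add: m_assoc)
      also have "\<dots> = (x \<otimes> x) \<otimes> ((y \<otimes> y) \<otimes> z)" using xy zG zc[of y] by (simp add: m_assoc)
      also have "\<dots> = z" using xx yy zG by simp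
      finally have sqz: "(x \<otimes> y) \<otimes> (x \<otimes> y) = z" .
      have "(x \<otimes> y) \<otimes> x = x \<otimes> (y \<otimes> x)" using xy by (simp add: m_assoc)
      also have "\<dots> = (x \<otimes> (x \<otimes> y)) \<otimes> z" using yxz xy zG by (simp add: m_assoc)
      finally have "(x \<otimes> y) \<otimes> x \<noteq> x \<otimes> (x \<otimes> y)" using zD(2) xy zG by simp
      then have wit: "\<exists>w\<in>carrier G. w \<otimes> (x \<otimes> y) \<noteq> (x \<otimes> y) \<otimes> w"
        using xy(1) by (intro bexI[of _ x]) auto
      show ?thesis by (rule that[OF _ sqz wit]) (use xy in simp)
    qed
  qed
  have "cls G z g0 n"
  proof (rule cls.intro)
    show "group G" by (rule is_group)
    show "cls_axioms G z g0 n"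
      by (rule cls_axioms.intro[OF fin cG n3 zG zD(2) zz zc sq cm g0(1) g0(2) g0(3)])
  qed
  then show ?thesis by blast
qed

end


lemma D8_carrier: "carrier D8 = {(0,False),(1,False),(2,False),(3,False),(0,True),(1,True),(2,True),(3,True)}"
proof -
  have "{0..<4::int} = {0,1,2,3}" by auto
  then show ?thesis unfolding D8_def by auto
qed

lemma D8_mult: "(a, b) \<otimes>\<^bsub>D8\<^esub> (c, d) = ((if b then a - c else a + c) mod 4, b \<noteq> d)"
  by (simp add: D8_def)

lemma D8_one: "\<one>\<^bsub>D8\<^esub> = (0, False)"
  by (simp add: D8_def)

lemma D8_group: "group D8"
proof (rule groupI)
  show "x \<otimes>\<^bsub>D8\<^esub> y \<in> carrier D8" if "x \<in> carrier D8" "y \<in> carrier D8" for x y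
    using that by (cases x, cases y) (simp add: D8_def)
  show "\<one>\<^bsub>D8\<^esub> \<in> carrier D8" by (simp add: D8_def)
  show "x \<otimes>\<^bsub>D8\<^esub> y \<otimes>\<^bsub>D8\<^esub> w = x \<otimes>\<^bsub>D8\<^esub> (y \<otimes>\<^bsub>D8\<^esub> w)" if "x \<in> carrier D8" "y \<in> carrier D8" "w \<in> carrier D8" for x y w
  proof -
    obtain a b c d e f where xyw: "x = (a, b)" "y = (c, d)" "w = (e, f)" by (cases x, cases y, cases w) auto
    show ?thesis unfolding xyw D8_mult
      by (cases b; cases d; cases f) (simp_all add: mod_simps algebra_simps)
  qed
  show "\<one>\<^bsub>D8\<^esub> \<otimes>\<^bsub>D8\<^esub> x = x" if "x \<in> carrier D8" for x
    using that by (cases x) (simp add: D8_def)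
  show "\<exists>y\<in>carrier D8. y \<otimes>\<^bsub>D8\<^esub> x = \<one>\<^bsub>D8\<^esub>" if "x \<in> carrier D8" for x
  proof -
    obtain a b where x: "x = (a, b)" by (cases x) auto
    show ?thesis
    proof (cases b)
      case True
      then show ?thesis using that x by (intro bexI[of _ "(a, b)"]) (simp_all add: D8_def)
    next
      case False
      then show ?thesis using that x by (intro bexI[of _ "((- a) mod 4, False)"]) (simp_all add: D8_def mod_simps)
    qed
  qed
qed

lemma C2_props: "group (C2_pow m) \<and> finite (carrier (C2_pow m)) \<and> card (carrier (C2_pow m)) = 2^m
   \<and> (\<forall>x\<in>carrier (C2_pow m). x \<otimes>\<^bsub>C2_pow m\<^esub> x = \<one>\<^bsub>C2_pow m\<^esub>)
   \<and> (\<forall>x\<in>carrier (C2_pow m). \<forall>y\<in>carrier (C2_pow m). x \<otimes>\<^bsub>C2_pow m\<^esub> y = y \<otimes>\<^bsub>C2_pow m\<^esub> x)"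
proof (induction m)
  case 0
  have "C2_pow 0 = nil_monoid" by (simp add: C2_pow_def DirProd_list_def)
  then show ?case by (simp add: group_def monoid_def group_axioms_def Units_def)
next
  case (Suc m)
  let ?Z = "integer_mod_group 2" and ?E = "C2_pow m"
  let ?f = "\<lambda>(g, gs). (g::int) # (gs::int list)"
  have eq: "C2_pow (Suc m) = DirProd_list (?Z # replicate m ?Z)" by (simp add: C2_pow_def)
  have iso: "?f \<in> iso (?Z \<times>\<times> ?E) (C2_pow (Suc m))"
    using DirProd_list_iso[of ?Z "replicate m ?Z"] unfolding C2_pow_def by simp
  have grpE: "group ?E" using Suc by simp
  have grpP: "group (?Z \<times>\<times> ?E)" by (rule DirProd_group[OF group_integer_mod_group grpE])
  have grp: "group (C2_pow (Suc m))" unfolding eq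
  proof (rule DirProd_list_is_group)
    fix i assume "i < length (?Z # replicate m ?Z)"
    then have "(?Z # replicate m ?Z) ! i = ?Z" by (cases i) auto
    then show "group ((?Z # replicate m ?Z) ! i)" by simp
  qed
  have bij: "bij_betw ?f (carrier (?Z \<times>\<times> ?E)) (carrier (C2_pow (Suc m)))" using iso by (simp add: iso_def)
  have hom: "?f \<in> hom (?Z \<times>\<times> ?E) (C2_pow (Suc m))" using iso by (simp add: iso_def)
  have carZ: "carrier ?Z = {0, 1}" by (auto simp: carrier_integer_mod_group)
  have finP: "finite (carrier (?Z \<times>\<times> ?E))" using Suc carZ by simp
  have cardP: "card (carrier (?Z \<times>\<times> ?E)) = 2 * 2^m" using Suc carZ by (simp add: card_cartesian_product)
  have fin: "finite (carrier (C2_pow (Suc m)))" using bij_betw_finite[OF bij] finP by simp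
  have card: "card (carrier (C2_pow (Suc m))) = 2^Suc m" using bij_betw_same_card[OF bij] cardP by simp
  have mulf: "?f p \<otimes>\<^bsub>C2_pow (Suc m)\<^esub> ?f q = ?f (p \<otimes>\<^bsub>?Z \<times>\<times> ?E\<^esub> q)"
    if "p \<in> carrier (?Z \<times>\<times> ?E)" "q \<in> carrier (?Z \<times>\<times> ?E)" for p q
  proof -
    obtain a e b e' where pq: "p = (a, e)" "q = (b, e')" by (cases p, cases q) auto
    show ?thesis using hom that unfolding pq by (auto simp: hom_def)
  qed
  have onef: "?f \<one>\<^bsub>?Z \<times>\<times> ?E\<^esub> = \<one>\<^bsub>C2_pow (Suc m)\<^esub>"
    by (simp add: C2_pow_def DirProd_list_one)
  have sqP: "p \<otimes>\<^bsub>?Z \<times>\<times> ?E\<^esub> p = \<one>\<^bsub>?Z \<times>\<times> ?E\<^esub>" if pc: "p \<in> carrier (?Z \<times>\<times> ?E)" for p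
  proof -
    obtain a e where p: "p = (a, e)" "a \<in> {0,1}" "e \<in> carrier ?E" using pc carZ by auto
    have "(a + a) mod 2 = 0" using p(2) by auto
    then show ?thesis using p Suc by simp
  qed
  have cmP: "p \<otimes>\<^bsub>?Z \<times>\<times> ?E\<^esub> q = q \<otimes>\<^bsub>?Z \<times>\<times> ?E\<^esub> p"
    if pc: "p \<in> carrier (?Z \<times>\<times> ?E)" "q \<in> carrier (?Z \<times>\<times> ?E)" for p q
  proof -
    obtain a e b e' where pq: "p = (a, e)" "q = (b, e')" "e \<in> carrier ?E" "e' \<in> carrier ?E"
      using pc by auto
    then show ?thesis using Suc by (simp add: add.commute)
  qed
  have sq: "x \<otimes>\<^bsub>C2_pow (Suc m)\<^esub> x = \<one>\<^bsub>C2_pow (Suc m)\<^esub>" if xc: "x \<in> carrier (C2_pow (Suc m))" for x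
  proof -
    have "x \<in> ?f ` carrier (?Z \<times>\<times> ?E)" using bij xc by (simp add: bij_betw_def)
    then obtain p where p: "p \<in> carrier (?Z \<times>\<times> ?E)" "x = ?f p" by blast
    show ?thesis using mulf[OF p(1) p(1)] sqP[OF p(1)] onef p(2) by simp
  qed
  have cm: "x \<otimes>\<^bsub>C2_pow (Suc m)\<^esub> y = y \<otimes>\<^bsub>C2_pow (Suc m)\<^esub> x"
    if xc: "x \<in> carrier (C2_pow (Suc m))" "y \<in> carrier (C2_pow (Suc m))" for x y
  proof -
    have "x \<in> ?f ` carrier (?Z \<times>\<times> ?E)" using bij xc by (simp add: bij_betw_def)
    then obtain p where p: "p \<in> carrier (?Z \<times>\<times> ?E)" "x = ?f p" by blast
    have "y \<in> ?f ` carrier (?Z \<times>\<times> ?E)" using bij xc by (simp add: bij_betw_def)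
    then obtain q where q: "q \<in> carrier (?Z \<times>\<times> ?E)" "y = ?f q" by blast
    show ?thesis using mulf[OF p(1) q(1)] mulf[OF q(1) p(1)] cmP[OF p(1) q(1)] p(2) q(2) by simp
  qed
  show ?case using grp fin card sq cm by blast
qed


lemma D8_sq: "d \<in> carrier D8 \<Longrightarrow> d \<otimes>\<^bsub>D8\<^esub> d = (0, False) \<or> d \<otimes>\<^bsub>D8\<^esub> d = (2, False)"
  unfolding D8_carrier by (auto simp: D8_mult)

lemma D8_sq1: "d \<in> carrier D8 \<Longrightarrow> d \<otimes>\<^bsub>D8\<^esub> d = (0, False) \<Longrightarrow> d \<in> {(0,False),(2,False),(0,True),(2,True),(1,True),(3,True)}"
  unfolding D8_carrier by (auto simp: D8_mult)

lemma D8_cm: "d \<in> carrier D8 \<Longrightarrow> d' \<in> carrier D8 \<Longrightarrow>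
   d \<otimes>\<^bsub>D8\<^esub> d' = d' \<otimes>\<^bsub>D8\<^esub> d \<or> d \<otimes>\<^bsub>D8\<^esub> d' = d' \<otimes>\<^bsub>D8\<^esub> d \<otimes>\<^bsub>D8\<^esub> (2, False)"
  unfolding D8_carrier by (auto simp: D8_mult)

lemma D8_z: "d \<in> carrier D8 \<Longrightarrow> (2, False) \<otimes>\<^bsub>D8\<^esub> d = d \<otimes>\<^bsub>D8\<^esub> (2, False)"
  unfolding D8_carrier by (auto simp: D8_mult)

lemma D8_nc: "d \<in> {(1,True),(3,True)} \<Longrightarrow> d' \<in> {(0,True),(2,True)} \<Longrightarrow> d \<otimes>\<^bsub>D8\<^esub> d' \<noteq> d' \<otimes>\<^bsub>D8\<^esub> d"
  by (auto simp: D8_mult)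

definition S1 :: "(int \<times> bool) set" where "S1 = {(0,False),(2,False),(0,True),(2,True)}"
definition S2 :: "(int \<times> bool) set" where "S2 = {(0,False),(2,False),(1,True),(3,True)}"
definition S0 :: "(int \<times> bool) set" where "S0 = {(0,False),(2,False)}"

lemma S_mult: "a \<in> S1 \<Longrightarrow> b \<in> S1 \<Longrightarrow> a \<otimes>\<^bsub>D8\<^esub> b \<in> S1"
  "a \<in> S2 \<Longrightarrow> b \<in> S2 \<Longrightarrow> a \<otimes>\<^bsub>D8\<^esub> b \<in> S2"
  "a \<in> S0 \<Longrightarrow> b \<in> S0 \<Longrightarrow> a \<otimes>\<^bsub>D8\<^esub> b \<in> S0"
  by (auto simp: S1_def S2_def S0_def D8_mult)

lemma S_car: "S1 \<subseteq> carrier D8" "S2 \<subseteq> carrier D8" "S0 \<subseteq> carrier D8"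
  by (auto simp: S1_def S2_def S0_def D8_carrier)

lemma S_sub: "subgroup S1 D8" "subgroup S2 D8" "subgroup S0 D8"
proof -
  interpret D: group D8 by (rule D8_group)
  have sq: "d \<otimes>\<^bsub>D8\<^esub> d = \<one>\<^bsub>D8\<^esub>" if "d \<in> S1 \<union> S2" for d
    using that by (auto simp: S1_def S2_def D8_mult D8_one)
  have inv: "inv\<^bsub>D8\<^esub> d = d" if "d \<in> S1 \<union> S2" for d
  proof -
    have "d \<in> carrier D8" using that S_car by blast
    then show ?thesis using sq[OF that] by (simp add: D.inv_equality)
  qed
  have inv0: "inv\<^bsub>D8\<^esub> d = d" if "d \<in> S0" for d using inv that by (auto simp: S0_def S1_def)
  show "subgroup S1 D8"
  proof (rule D.subgroupI)
    show "S1 \<noteq> {}" by (simp add: S1_def)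
  qed (use S_car S_mult inv in auto)
  show "subgroup S2 D8"
  proof (rule D.subgroupI)
    show "S2 \<noteq> {}" by (simp add: S2_def)
  qed (use S_car S_mult inv in auto)
  show "subgroup S0 D8"
  proof (rule D.subgroupI)
    show "S0 \<noteq> {}" by (simp add: S0_def)
  qed (use S_car S_mult inv0 in auto)
qed

lemma S_elem: "d \<in> S1 \<Longrightarrow> d \<otimes>\<^bsub>D8\<^esub> d = (0, False)" "d \<in> S2 \<Longrightarrow> d \<otimes>\<^bsub>D8\<^esub> d = (0, False)"
  "d \<in> S1 \<Longrightarrow> d' \<in> S1 \<Longrightarrow> d \<otimes>\<^bsub>D8\<^esub> d' = d' \<otimes>\<^bsub>D8\<^esub> d"
  "d \<in> S2 \<Longrightarrow> d' \<in> S2 \<Longrightarrow> d \<otimes>\<^bsub>D8\<^esub> d' = d' \<otimes>\<^bsub>D8\<^esub> d"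
  by (auto simp: S1_def S2_def D8_mult)


context cls begin

lemma BE_count:
  assumes E: "subgroup E G" "z \<in> E" "elem_rel E {\<one>}" "card E = 2^Suc d"
  shows "card {H \<in> BB (Suc j). H \<subseteq> E} = 2^Suc j * Ng d (Suc j)"
proof -
  have EG: "E \<subseteq> carrier G" using E(1) subgroup.subset by blast
  have finE: "finite E" using EG fin finite_subset by blast
  have Z0E: "Z0 \<subseteq> E" using E(2) subgroup.one_closed[OF E(1)] by (auto simp: Z0_def)
  have erZ: "elem_rel E Z0"
    using E(3) Z0_sub Z0E unfolding elem_rel_def Z0_def by blast
  have c1: "card (Subs E {\<one>} (Suc j)) = Ng (Suc d) (Suc j)"
    using card_Subs[OF E(3) finE, of "Suc d" "Suc j"] E(4) by simp
  have c2: "card (Subs E Z0 j) = Ng d j"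
    using card_Subs[OF erZ finE, of d j] E(4) card_Z0 by simp
  let ?BE = "{H \<in> BB (Suc j). H \<subseteq> E}"
  have eq: "Subs E {\<one>} (Suc j) = Subs E Z0 j \<union> ?BE"
  proof
    show "Subs E {\<one>} (Suc j) \<subseteq> Subs E Z0 j \<union> ?BE"
    proof
      fix H assume H: "H \<in> Subs E {\<one>} (Suc j)"
      then have Hs: "subgroup H G" "H \<subseteq> E" "card H = 2^Suc j" by (auto simp: Subs_def)
      show "H \<in> Subs E Z0 j \<union> ?BE"
      proof (cases "z \<in> H")
        case True
        then have "Z0 \<subseteq> H" using subgroup.one_closed[OF Hs(1)] by (auto simp: Z0_def)
        then show ?thesis using Hs card_Z0 by (auto simp: Subs_def)
      next
        case False then show ?thesis using Hs by (auto simp: BB_def)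
      qed
    qed
    show "Subs E Z0 j \<union> ?BE \<subseteq> Subs E {\<one>} (Suc j)"
      using card_Z0 subgroup.one_closed by (fastforce simp: Subs_def BB_def Z0_def)
  qed
  have fin1: "finite (Subs E {\<one>} (Suc j))"
    by (rule finite_subset[of _ "Pow E"]) (auto simp: Subs_def finE)
  have disj: "Subs E Z0 j \<inter> ?BE = {}" by (auto simp: Subs_def BB_def Z0_def)
  have "card (Subs E {\<one>} (Suc j)) = card (Subs E Z0 j) + card ?BE"
    unfolding eq by (rule card_Un_disjoint) (use fin1 eq in \<open>auto intro: finite_subset simp: disj\<close>)
  then show ?thesis using c1 c2 by simp
qed

end

definition zT :: "nat \<Rightarrow> (int \<times> bool) \<times> int list" where "zT m = ((2, False), \<one>\<^bsub>C2_pow m\<^esub>)"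
definition g0T :: "nat \<Rightarrow> (int \<times> bool) \<times> int list" where "g0T m = ((1, False), \<one>\<^bsub>C2_pow m\<^esub>)"

lemma T_group: "group (D8_times_C2_pow m)"
  unfolding D8_times_C2_pow_def using DirProd_group[OF D8_group] C2_props by blast

lemma cls_T:
  assumes n: "n = m + 3"
  shows "cls (D8_times_C2_pow m) (zT m) (g0T m) n"
proof -
  let ?E = "C2_pow m" and ?T = "D8_times_C2_pow m"
  have E: "group ?E" "finite (carrier ?E)" "card (carrier ?E) = 2^m"
    "\<And>x. x \<in> carrier ?E \<Longrightarrow> x \<otimes>\<^bsub>?E\<^esub> x = \<one>\<^bsub>?E\<^esub>"
    "\<And>x y. x \<in> carrier ?E \<Longrightarrow> y \<in> carrier ?E \<Longrightarrow> x \<otimes>\<^bsub>?E\<^esub> y = y \<otimes>\<^bsub>?E\<^esub> x"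
    using C2_props by auto
  interpret E: group ?E by (rule E(1))
  have carT: "carrier ?T = carrier D8 \<times> carrier ?E" by (simp add: D8_times_C2_pow_def)
  have mulT: "(a, b) \<otimes>\<^bsub>?T\<^esub> (c, d) = (a \<otimes>\<^bsub>D8\<^esub> c, b \<otimes>\<^bsub>?E\<^esub> d)" for a b c d
    by (simp add: D8_times_C2_pow_def)
  have oneT: "\<one>\<^bsub>?T\<^esub> = ((0, False), \<one>\<^bsub>?E\<^esub>)" by (simp add: D8_times_C2_pow_def D8_one)
  have finD: "finite (carrier D8)" by (simp add: D8_carrier)
  have cardD: "card (carrier D8) = 8" by (simp add: D8_carrier)
  show ?thesis
  proof (rule cls.intro[OF T_group], rule cls_axioms.intro)
    show "finite (carrier ?T)" using finD E(2) carT by simp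
    show "card (carrier ?T) = 2^n" using cardD E(3) carT n by (simp add: card_cartesian_product power_add)
    show "3 \<le> n" using n by simp
    show "zT m \<in> carrier ?T" using carT by (simp add: zT_def D8_carrier)
    show "zT m \<noteq> \<one>\<^bsub>?T\<^esub>" using oneT by (simp add: zT_def)
    show "zT m \<otimes>\<^bsub>?T\<^esub> zT m = \<one>\<^bsub>?T\<^esub>" using oneT by (simp add: zT_def mulT D8_mult)
    show "zT m \<otimes>\<^bsub>?T\<^esub> x = x \<otimes>\<^bsub>?T\<^esub> zT m" if x: "x \<in> carrier ?T" for x
    proof -
      obtain d e where de: "x = (d, e)" "d \<in> carrier D8" "e \<in> carrier ?E" using x carT by auto
      show ?thesis using de D8_z[OF de(2)] by (simp add: zT_def mulT)
    qed
    show "x \<otimes>\<^bsub>?T\<^esub> x = \<one>\<^bsub>?T\<^esub> \<or> x \<otimes>\<^bsub>?T\<^esub> x = zT m" if x: "x \<in> carrier ?T" for x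
    proof -
      obtain d e where de: "x = (d, e)" "d \<in> carrier D8" "e \<in> carrier ?E" using x carT by auto
      show ?thesis using de D8_sq[OF de(2)] E(4)[OF de(3)] oneT by (auto simp: zT_def mulT)
    qed
    show "x \<otimes>\<^bsub>?T\<^esub> y = y \<otimes>\<^bsub>?T\<^esub> x \<or> x \<otimes>\<^bsub>?T\<^esub> y = y \<otimes>\<^bsub>?T\<^esub> x \<otimes>\<^bsub>?T\<^esub> zT m"
      if xy: "x \<in> carrier ?T" "y \<in> carrier ?T" for x y
    proof -
      obtain d e where de: "x = (d, e)" "d \<in> carrier D8" "e \<in> carrier ?E" using xy carT by auto
      obtain d' e' where de': "y = (d', e')" "d' \<in> carrier D8" "e' \<in> carrier ?E" using xy carT by auto
      have ee: "e \<otimes>\<^bsub>?E\<^esub> e' = e' \<otimes>\<^bsub>?E\<^esub> e" using E(5) de(3) de'(3) by blast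
      have e1: "e' \<otimes>\<^bsub>?E\<^esub> e \<otimes>\<^bsub>?E\<^esub> \<one>\<^bsub>?E\<^esub> = e' \<otimes>\<^bsub>?E\<^esub> e" using de(3) de'(3) by simp
      show ?thesis using de de' D8_cm[OF de(2) de'(2)] ee e1 by (auto simp: zT_def mulT)
    qed
    show "g0T m \<in> carrier ?T" using carT by (simp add: g0T_def D8_carrier)
    show "g0T m \<otimes>\<^bsub>?T\<^esub> g0T m = zT m" by (simp add: g0T_def zT_def mulT D8_mult)
    show "\<exists>y\<in>carrier ?T. y \<otimes>\<^bsub>?T\<^esub> g0T m \<noteq> g0T m \<otimes>\<^bsub>?T\<^esub> y"
    proof (rule bexI[of _ "((0, True), \<one>\<^bsub>?E\<^esub>)"])
      show "((0, True), \<one>\<^bsub>?E\<^esub>) \<in> carrier ?T" using carT by (simp add: D8_carrier)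
      show "((0, True), \<one>\<^bsub>?E\<^esub>) \<otimes>\<^bsub>?T\<^esub> g0T m \<noteq> g0T m \<otimes>\<^bsub>?T\<^esub> ((0, True), \<one>\<^bsub>?E\<^esub>)"
        by (simp add: g0T_def mulT D8_mult)
    qed
  qed
qed


lemma T_count:
  assumes n: "n = m + 3"
  shows "num_subgroups_of_order (D8_times_C2_pow m) (2^Suc j) + 2^Suc j * Ng (n-3) (Suc j)
       = Ng (n-1) j + 2^Suc (Suc j) * Ng (n-2) (Suc j)"
proof -
  let ?E = "C2_pow m" and ?T = "D8_times_C2_pow m"
  interpret T: cls ?T "zT m" "g0T m" n by (rule cls_T[OF n])
  have E: "group ?E" "finite (carrier ?E)" "card (carrier ?E) = 2^m"
    "\<And>x. x \<in> carrier ?E \<Longrightarrow> x \<otimes>\<^bsub>?E\<^esub> x = \<one>\<^bsub>?E\<^esub>"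
    "\<And>x y. x \<in> carrier ?E \<Longrightarrow> y \<in> carrier ?E \<Longrightarrow> x \<otimes>\<^bsub>?E\<^esub> y = y \<otimes>\<^bsub>?E\<^esub> x"
    using C2_props by auto
  interpret E: group ?E by (rule E(1))
  have carT: "carrier ?T = carrier D8 \<times> carrier ?E" by (simp add: D8_times_C2_pow_def)
  have mulT: "(a, b) \<otimes>\<^bsub>?T\<^esub> (c, d) = (a \<otimes>\<^bsub>D8\<^esub> c, b \<otimes>\<^bsub>?E\<^esub> d)" for a b c d
    by (simp add: D8_times_C2_pow_def)
  have oneT: "\<one>\<^bsub>?T\<^esub> = ((0, False), \<one>\<^bsub>?E\<^esub>)" by (simp add: D8_times_C2_pow_def D8_one)
  have Esub: "subgroup (S \<times> carrier ?E) ?T" if "subgroup S D8" for S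
    unfolding D8_times_C2_pow_def by (rule DirProd_subgroups[OF D8_group that E(1) E.subgroup_self])
  have Eer: "T.elem_rel (S \<times> carrier ?E) {\<one>\<^bsub>?T\<^esub>}"
    if S: "subgroup S D8" and sq: "\<And>d. d \<in> S \<Longrightarrow> d \<otimes>\<^bsub>D8\<^esub> d = (0, False)"
      and cm: "\<And>d d'. d \<in> S \<Longrightarrow> d' \<in> S \<Longrightarrow> d \<otimes>\<^bsub>D8\<^esub> d' = d' \<otimes>\<^bsub>D8\<^esub> d" for S
    unfolding T.elem_rel_def
  proof (intro conjI ballI)
    show "subgroup (S \<times> carrier ?E) ?T" using Esub[OF S] .
    show "subgroup {\<one>\<^bsub>?T\<^esub>} ?T" by (rule T.triv_subgroup)
    show "{\<one>\<^bsub>?T\<^esub>} \<subseteq> S \<times> carrier ?E" using oneT subgroup.one_closed[OF S] by (simp add: D8_one)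
    show "x \<otimes>\<^bsub>?T\<^esub> x \<in> {\<one>\<^bsub>?T\<^esub>}" if x: "x \<in> S \<times> carrier ?E" for x
    proof -
      obtain d e where de: "x = (d, e)" "d \<in> S" "e \<in> carrier ?E" using x by auto
      show ?thesis using de sq[OF de(2)] E(4)[OF de(3)] oneT by (simp add: mulT)
    qed
    show "\<exists>c\<in>{\<one>\<^bsub>?T\<^esub>}. x \<otimes>\<^bsub>?T\<^esub> y = y \<otimes>\<^bsub>?T\<^esub> x \<otimes>\<^bsub>?T\<^esub> c"
      if xy: "x \<in> S \<times> carrier ?E" "y \<in> S \<times> carrier ?E" for x y
    proof -
      obtain d e where de: "x = (d, e)" "d \<in> S" "e \<in> carrier ?E" using xy by auto
      obtain d' e' where de': "y = (d', e')" "d' \<in> S" "e' \<in> carrier ?E" using xy by auto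
      have yG: "y \<otimes>\<^bsub>?T\<^esub> x \<in> carrier ?T" using xy Esub[OF S] subgroup.subset T.m_closed by blast
      have "x \<otimes>\<^bsub>?T\<^esub> y = y \<otimes>\<^bsub>?T\<^esub> x" using de de' cm[OF de(2) de'(2)] E(5)[OF de(3) de'(3)] by (simp add: mulT)
      then show ?thesis using yG by simp
    qed
  qed
  define E1 where "E1 = S1 \<times> carrier ?E"
  define E2 where "E2 = S2 \<times> carrier ?E"
  define E0 where "E0 = S0 \<times> carrier ?E"
  have zE: "zT m \<in> E1" "zT m \<in> E2" "zT m \<in> E0" by (auto simp: zT_def E1_def E2_def E0_def S1_def S2_def S0_def)
  have S0sq: "d \<otimes>\<^bsub>D8\<^esub> d = (0, False)" if "d \<in> S0" for d using that S_elem(1) by (auto simp: S0_def S1_def)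
  have S0cm: "d \<otimes>\<^bsub>D8\<^esub> d' = d' \<otimes>\<^bsub>D8\<^esub> d" if "d \<in> S0" "d' \<in> S0" for d d'
    using that S_elem(3) by (auto simp: S0_def S1_def)
  have er1: "T.elem_rel E1 {\<one>\<^bsub>?T\<^esub>}" unfolding E1_def by (rule Eer[OF S_sub(1) S_elem(1) S_elem(3)])
  have er2: "T.elem_rel E2 {\<one>\<^bsub>?T\<^esub>}" unfolding E2_def by (rule Eer[OF S_sub(2) S_elem(2) S_elem(4)])
  have er0: "T.elem_rel E0 {\<one>\<^bsub>?T\<^esub>}" unfolding E0_def by (rule Eer[OF S_sub(3) S0sq S0cm])
  have cE1: "card E1 = 2^Suc (n-2)" using E(3) n by (simp add: E1_def S1_def card_cartesian_product)
  have cE2: "card E2 = 2^Suc (n-2)" using E(3) n by (simp add: E2_def S2_def card_cartesian_product)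
  have cE0: "card E0 = 2^Suc (n-3)" using E(3) n by (simp add: E0_def S0_def card_cartesian_product)
  have sub1: "subgroup E1 ?T" unfolding E1_def by (rule Esub[OF S_sub(1)])
  have sub2: "subgroup E2 ?T" unfolding E2_def by (rule Esub[OF S_sub(2)])
  have sub0: "subgroup E0 ?T" unfolding E0_def by (rule Esub[OF S_sub(3)])
  let ?B = "\<lambda>E. {H \<in> T.BB (Suc j). H \<subseteq> E}"
  have b1: "card (?B E1) = 2^Suc j * Ng (n-2) (Suc j)"
    using T.BE_count[OF sub1 zE(1) er1 cE1] by simp
  have b2: "card (?B E2) = 2^Suc j * Ng (n-2) (Suc j)"
    using T.BE_count[OF sub2 zE(2) er2 cE2] by simp
  have b0: "card (?B E0) = 2^Suc j * Ng (n-3) (Suc j)"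
    using T.BE_count[OF sub0 zE(3) er0 cE0] by simp
  have int: "?B E1 \<inter> ?B E2 = ?B E0"
  proof -
    have "E1 \<inter> E2 = E0" by (auto simp: E1_def E2_def E0_def S1_def S2_def S0_def)
    then show ?thesis by blast
  qed
  have un: "T.BB (Suc j) = ?B E1 \<union> ?B E2"
  proof
    show "?B E1 \<union> ?B E2 \<subseteq> T.BB (Suc j)" by blast
    show "T.BB (Suc j) \<subseteq> ?B E1 \<union> ?B E2"
    proof
      fix H assume H: "H \<in> T.BB (Suc j)"
      note P = T.BB_props[OF H]
      have "H \<subseteq> E1 \<or> H \<subseteq> E2"
      proof (rule ccontr)
        assume "\<not> (H \<subseteq> E1 \<or> H \<subseteq> E2)"
        then obtain h h' where hh: "h \<in> H" "h \<notin> E1" "h' \<in> H" "h' \<notin> E2" by blast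
        obtain d e where de: "h = (d, e)" "d \<in> carrier D8" "e \<in> carrier ?E" using hh P(4) carT by blast
        obtain d' e' where de': "h' = (d', e')" "d' \<in> carrier D8" "e' \<in> carrier ?E" using hh P(4) carT by blast
        have "d \<otimes>\<^bsub>D8\<^esub> d = (0, False)" using P(6)[OF hh(1)] de oneT by (simp add: mulT)
        then have "d \<in> {(0,False),(2,False),(0,True),(2,True),(1,True),(3,True)}" using D8_sq1 de(2) by blast
        moreover have "d \<notin> S1" using hh(2) de by (simp add: E1_def)
        ultimately have d: "d \<in> {(1,True),(3,True)}" by (auto simp: S1_def)
        have "d' \<otimes>\<^bsub>D8\<^esub> d' = (0, False)" using P(6)[OF hh(3)] de' oneT by (simp add: mulT)
        then have "d' \<in> {(0,False),(2,False),(0,True),(2,True),(1,True),(3,True)}" using D8_sq1 de'(2) by blast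
        moreover have "d' \<notin> S2" using hh(4) de' by (simp add: E2_def)
        ultimately have d': "d' \<in> {(0,True),(2,True)}" by (auto simp: S2_def)
        have "d \<otimes>\<^bsub>D8\<^esub> d' = d' \<otimes>\<^bsub>D8\<^esub> d" using P(7)[OF hh(1) hh(3)] de de' by (simp add: mulT)
        then show False using D8_nc[OF d d'] by simp
      qed
      then show "H \<in> ?B E1 \<union> ?B E2" using H by blast
    qed
  qed
  have finT: "finite (carrier ?T)" by (rule T.fin)
  have finB: "finite (?B E)" for E
    by (rule finite_subset[of _ "Pow (carrier ?T)"]) (auto simp: T.BB_def finT dest: subgroup.subset)
  have c3: "card (?B E1 \<union> ?B E2) + card (?B E1 \<inter> ?B E2) = card (?B E1) + card (?B E2)"
    by (rule card_Un_Int[OF finB finB, symmetric])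
  have c4: "card (T.BB (Suc j)) = card (?B E1 \<union> ?B E2)" using arg_cong[OF un, of card] .
  have c5: "card (?B E1 \<inter> ?B E2) = card (?B E0)" using arg_cong[OF int, of card] .
  have "card (T.BB (Suc j)) + card (?B E0) = card (?B E1) + card (?B E2)" using c3 c4 c5 by linarith
  then show ?thesis using T.s_split[of j] b1 b2 b0 by simp
qed



theorem corollary2p7:
  fixes G :: "('a, 'b) monoid_scheme" and n k :: nat
  assumes "group G"
    and "finite (carrier G)"
    and "card (carrier G) = 2 ^ n"
    and "n \<ge> 3"
    and "extraspecial G \<or> almost_extraspecial G"
    and "k \<le> n"
  shows "num_subgroups_of_order G (2 ^ k) \<le> num_subgroups_of_order (D8_times_C2_pow (n - 3)) (2 ^ k)"
proof -
  interpret group G by fact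
  have D: "card (commutator_subgroup G) = 2" "commutator_subgroup G = frattini G"
    using assms(5) unfolding extraspecial_def almost_extraspecial_def by auto
  obtain z g0 where c: "cls G z g0 n" using derive_cls[OF assms(2,3,4) D] by blast
  interpret C: cls G z g0 n by (rule c)
  show ?thesis
  proof (cases k)
    case 0
    have T: "group (D8_times_C2_pow (n-3))" by (rule T_group)
    show ?thesis using 0 s0 group.s0[OF T] by simp
  next
    case (Suc j)
    have n: "n = (n-3) + 3" using assms(4) by simp
    show ?thesis using C.G_bound[of j] T_count[OF n, of j] Suc by simp
  qed
qed

end
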